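(* Let $(X,\mathcal U)$ be a non-archimedean uniform space and $\mathcal B$ a base of $\mathcal U$ consisting of equivalence relations. Realize $F_{NA}(X,\mathcal U)$ and $F^b_{NA}(X,\mathcal U)$ on the abstract free group $F(X)$ with $i(x)=x$. Then: (1) the family of subgroups $\{[V_\psi]:\psi\in\mathcal B^{F(X)}\}$ is a base of neighborhoods of the identity in $F_{NA}(X,\mathcal U)$; (2)(a) the family of normal subgroups $\{[\tilde\varepsilon]:\varepsilon\in\mathcal B\}$ is a base of neighborhoods of the identity in $F^b_{NA}(X,\mathcal U)$; (b) the topology of $F^b_{NA}(X,\mathcal U)$ is the weak topology generated by the homomorphisms $\overline{f_\varepsilon}\colon F(X)\to F(X/\varepsilon)$, $\varepsilon\in\mathcal B$, where each $F(X/\varepsilon)$ is discrete.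
   Context: A uniform space is non-archimedean if its uniformity has a base of equivalence relations. A topological group is non-archimedean if it has a local base at the identity of open subgroups, balanced if its left and right uniformities coincide. $F_{NA}(X,\mathcal U)$ (resp. $F^b_{NA}(X,\mathcal U)$) is the non-archimedean (resp. balanced non-archimedean) Hausdorff group with uniformly continuous $i\colon X\to G$ (two-sided uniformity) through which every uniformly continuous map into such a group factors uniquely by a continuous homomorphism; both are algebraically free on $i(X)$. In $F(X)$ let $j_2(\varepsilon)=\{x^{-1}y:(x,y)\in\varepsilon\}$, $j_2^*(\varepsilon)=\{xy^{-1}:(x,y)\in\varepsilon\}$; for $\psi\colon F(X)\to\mathcal B$ let $V_\psi=\bigcup_{w\in F(X)} w\big(j_2(\psi(w))\cup j_2^*(\psi(w))\big)w^{-1}$, and $\tilde\varepsilon=\bigcup_{w\in F(X)} w\big(j_2(\varepsilon)\cup j_2^*(\varepsilon)\big)w^{-1}$. For a symmetric set $A$, $[A]=\bigcup_n A^n$ is the subgroup it generates. $X/\varepsilon$ is the quotient set, $f_\varepsilon\colon X\to X/\varepsilon$ the quotient map, and $\overline{f_\varepsilon}\colon F(X)\to F(X/\varepsilon)$ its homomorphic extension. *)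

theory Defs
  imports "HOL-Analysis.Analysis" "HOL-Algebra.Algebra"
begin

definition uniformity_on_set :: "'a set \<Rightarrow> ('a \<times> 'a) set set \<Rightarrow> bool" where
  "uniformity_on_set S U \<longleftrightarrow>
     U \<noteq> {} \<and>
     (\<forall>E\<in>U. E \<subseteq> S \<times> S \<and> Id_on S \<subseteq> E \<and> converse E \<in> U \<and> (\<exists>D\<in>U. relcomp D D \<subseteq> E)) \<and>
     (\<forall>E\<in>U. \<forall>D\<in>U. E \<inter> D \<in> U) \<and>
     (\<forall>E\<in>U. \<forall>D. E \<subseteq> D \<and> D \<subseteq> S \<times> S \<longrightarrow> D \<in> U)"

definition is_base :: "('a \<times> 'a) set set \<Rightarrow> ('a \<times> 'a) set set \<Rightarrow> bool" where
  "is_base U B \<longleftrightarrow> B \<subseteq> U \<and> (\<forall>E\<in>U. \<exists>e\<in>B. e \<subseteq> E)"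

definition unif_continuous ::
  "'a set \<Rightarrow> ('a \<times> 'a) set set \<Rightarrow> ('b \<times> 'b) set set \<Rightarrow> ('a \<Rightarrow> 'b) \<Rightarrow> bool" where
  "unif_continuous S U V f \<longleftrightarrow> (\<forall>E\<in>V. \<exists>D\<in>U. \<forall>(x,y)\<in>D. (f x, f y) \<in> E)"

definition topgroup :: "('g, 'm) monoid_scheme \<Rightarrow> 'g topology \<Rightarrow> bool" where
  "topgroup G T \<longleftrightarrow> group G \<and> topspace T = carrier G \<and>
     continuous_map (prod_topology T T) T (\<lambda>p. fst p \<otimes>\<^bsub>G\<^esub> snd p) \<and>
     continuous_map T T (\<lambda>x. inv\<^bsub>G\<^esub> x)"

definition nbhd1 :: "('g, 'm) monoid_scheme \<Rightarrow> 'g topology \<Rightarrow> 'g set \<Rightarrow> bool" where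
  "nbhd1 G T V \<longleftrightarrow> V \<subseteq> topspace T \<and> (\<exists>W. openin T W \<and> \<one>\<^bsub>G\<^esub> \<in> W \<and> W \<subseteq> V)"

definition nonarch_group :: "('g, 'm) monoid_scheme \<Rightarrow> 'g topology \<Rightarrow> bool" where
  "nonarch_group G T \<longleftrightarrow> topgroup G T \<and>
     (\<forall>V. nbhd1 G T V \<longrightarrow> (\<exists>H. subgroup H G \<and> openin T H \<and> H \<subseteq> V))"

definition left_unif :: "('g, 'm) monoid_scheme \<Rightarrow> 'g topology \<Rightarrow> ('g \<times> 'g) set set" where
  "left_unif G T = {E. E \<subseteq> carrier G \<times> carrier G \<and> (\<exists>V. nbhd1 G T V \<and>
      {(g,h). g \<in> carrier G \<and> h \<in> carrier G \<and> inv\<^bsub>G\<^esub> g \<otimes>\<^bsub>G\<^esub> h \<in> V} \<subseteq> E)}"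

definition right_unif :: "('g, 'm) monoid_scheme \<Rightarrow> 'g topology \<Rightarrow> ('g \<times> 'g) set set" where
  "right_unif G T = {E. E \<subseteq> carrier G \<times> carrier G \<and> (\<exists>V. nbhd1 G T V \<and>
      {(g,h). g \<in> carrier G \<and> h \<in> carrier G \<and> h \<otimes>\<^bsub>G\<^esub> inv\<^bsub>G\<^esub> g \<in> V} \<subseteq> E)}"

definition two_sided_unif :: "('g, 'm) monoid_scheme \<Rightarrow> 'g topology \<Rightarrow> ('g \<times> 'g) set set" where
  "two_sided_unif G T = {E. E \<subseteq> carrier G \<times> carrier G \<and> (\<exists>V. nbhd1 G T V \<and>
      {(g,h). g \<in> carrier G \<and> h \<in> carrier G \<and> inv\<^bsub>G\<^esub> g \<otimes>\<^bsub>G\<^esub> h \<in> V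
              \<and> h \<otimes>\<^bsub>G\<^esub> inv\<^bsub>G\<^esub> g \<in> V} \<subseteq> E)}"

definition balanced_group :: "('g, 'm) monoid_scheme \<Rightarrow> 'g topology \<Rightarrow> bool" where
  "balanced_group G T \<longleftrightarrow> left_unif G T = right_unif G T"

type_synonym 'a word = "('a \<times> bool) list"

definition canceling :: "'a \<times> bool \<Rightarrow> 'a \<times> bool \<Rightarrow> bool" where
  "canceling p q \<longleftrightarrow> fst p = fst q \<and> snd p \<noteq> snd q"

definition reduced :: "'a word \<Rightarrow> bool" where
  "reduced w \<longleftrightarrow> (\<forall>i. Suc i < length w \<longrightarrow> \<not> canceling (w ! i) (w ! Suc i))"

definition reduce :: "'a word \<Rightarrow> 'a word" where
  "reduce w = foldr (\<lambda>x acc. case acc of [] \<Rightarrow> [x]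
                      | y # ys \<Rightarrow> (if canceling x y then ys else x # acc)) w []"

text \<open>F(S): reduced words over the letters x (True) and x^-1 (False), x in S.\<close>
definition free_group :: "'a set \<Rightarrow> 'a word monoid" where
  "free_group S = \<lparr>carrier = {w. fst ` set w \<subseteq> S \<and> reduced w},
                   mult = (\<lambda>u v. reduce (u @ v)), one = []\<rparr>"

definition ins :: "'a \<Rightarrow> 'a word" where
  "ins x = [(x, True)]"

text \<open>Target groups in the universal property range over groups whose elements
  are sets of words; every Hausdorff group receiving a homomorphism from F(S)
  contains the image, which is isomorphic to a quotient of F(S), i.e. a group of
  such sets, so this is no restriction.\<close>
definition is_FNA :: "'a set \<Rightarrow> ('a \<times> 'a) set set \<Rightarrow> 'a word topology \<Rightarrow> bool" where
  "is_FNA S U T \<longleftrightarrow>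
     nonarch_group (free_group S) T \<and> Hausdorff_space T \<and>
     unif_continuous S U (two_sided_unif (free_group S) T) ins \<and>
     (\<forall>(G :: 'a word set monoid) TG f.
        nonarch_group G TG \<and> Hausdorff_space TG \<and> f \<in> S \<rightarrow> carrier G \<and>
        unif_continuous S U (two_sided_unif G TG) f \<longrightarrow>
        (\<exists>h. h \<in> hom (free_group S) G \<and> continuous_map T TG h \<and> (\<forall>x\<in>S. h (ins x) = f x) \<and>
           (\<forall>h'. h' \<in> hom (free_group S) G \<and> continuous_map T TG h' \<and>
                 (\<forall>x\<in>S. h' (ins x) = f x) \<longrightarrow> (\<forall>w\<in>carrier (free_group S). h' w = h w))))"

definition is_FNA_b :: "'a set \<Rightarrow> ('a \<times> 'a) set set \<Rightarrow> 'a word topology \<Rightarrow> bool" where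
  "is_FNA_b S U T \<longleftrightarrow>
     nonarch_group (free_group S) T \<and> balanced_group (free_group S) T \<and> Hausdorff_space T \<and>
     unif_continuous S U (two_sided_unif (free_group S) T) ins \<and>
     (\<forall>(G :: 'a word set monoid) TG f.
        nonarch_group G TG \<and> balanced_group G TG \<and> Hausdorff_space TG \<and> f \<in> S \<rightarrow> carrier G \<and>
        unif_continuous S U (two_sided_unif G TG) f \<longrightarrow>
        (\<exists>h. h \<in> hom (free_group S) G \<and> continuous_map T TG h \<and> (\<forall>x\<in>S. h (ins x) = f x) \<and>
           (\<forall>h'. h' \<in> hom (free_group S) G \<and> continuous_map T TG h' \<and>
                 (\<forall>x\<in>S. h' (ins x) = f x) \<longrightarrow> (\<forall>w\<in>carrier (free_group S). h' w = h w))))"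

definition j2 :: "'a set \<Rightarrow> ('a \<times> 'a) set \<Rightarrow> 'a word set" where
  "j2 S e = {inv\<^bsub>free_group S\<^esub> (ins x) \<otimes>\<^bsub>free_group S\<^esub> ins y | x y. (x, y) \<in> e}"

definition j2s :: "'a set \<Rightarrow> ('a \<times> 'a) set \<Rightarrow> 'a word set" where
  "j2s S e = {ins x \<otimes>\<^bsub>free_group S\<^esub> inv\<^bsub>free_group S\<^esub> (ins y) | x y. (x, y) \<in> e}"

definition V_psi :: "'a set \<Rightarrow> ('a word \<Rightarrow> ('a \<times> 'a) set) \<Rightarrow> 'a word set" where
  "V_psi S \<psi> = (\<Union>w\<in>carrier (free_group S).
      {w \<otimes>\<^bsub>free_group S\<^esub> a \<otimes>\<^bsub>free_group S\<^esub> inv\<^bsub>free_group S\<^esub> w | a.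
         a \<in> j2 S (\<psi> w) \<union> j2s S (\<psi> w)})"

definition eps_tilde :: "'a set \<Rightarrow> ('a \<times> 'a) set \<Rightarrow> 'a word set" where
  "eps_tilde S e = (\<Union>w\<in>carrier (free_group S).
      {w \<otimes>\<^bsub>free_group S\<^esub> a \<otimes>\<^bsub>free_group S\<^esub> inv\<^bsub>free_group S\<^esub> w | a.
         a \<in> j2 S e \<union> j2s S e})"

definition f_quot :: "('a \<times> 'a) set \<Rightarrow> 'a \<Rightarrow> 'a set" where
  "f_quot e x = e `` {x}"

definition f_bar :: "('a \<times> 'a) set \<Rightarrow> 'a word \<Rightarrow> 'a set word" where
  "f_bar e w = reduce (map (\<lambda>(x, b). (f_quot e x, b)) w)"

end

theory Submission
  imports Defs
begin


definition step :: "'a \<times> bool \<Rightarrow> 'a word \<Rightarrow> 'a word" where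
  "step = (\<lambda>x acc. case acc of [] \<Rightarrow> [x] | y # ys \<Rightarrow> (if canceling x y then ys else x # acc))"

lemma reduce_foldr: "reduce w = foldr step w []"
  unfolding reduce_def step_def by simp

lemma reduce_Nil[simp]: "reduce [] = []"
  by (simp add: reduce_foldr)

lemma reduce_Cons: "reduce (a # w) = step a (reduce w)"
  by (simp add: reduce_foldr)

lemma step_Nil[simp]: "step a [] = [a]" by (simp add: step_def)
lemma step_Cons: "step a (y # ys) = (if canceling a y then ys else a # y # ys)"
  by (simp add: step_def)

lemma reduced_Nil[simp]: "reduced []" by (simp add: reduced_def)

lemma reduced_Cons: "reduced (a # w) \<longleftrightarrow> reduced w \<and> (w = [] \<or> \<not> canceling a (hd w))"
proof
  assume r: "reduced (a # w)"
  have "reduced w" unfolding reduced_def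
  proof (intro allI impI)
    fix i assume "Suc i < length w"
    with r[unfolded reduced_def, rule_format, of "Suc i"] show "\<not> canceling (w ! i) (w ! Suc i)" by simp
  qed
  moreover have "w = [] \<or> \<not> canceling a (hd w)"
    using r[unfolded reduced_def, rule_format, of 0] by (cases w) auto
  ultimately show "reduced w \<and> (w = [] \<or> \<not> canceling a (hd w))" by blast
next
  assume h: "reduced w \<and> (w = [] \<or> \<not> canceling a (hd w))"
  show "reduced (a # w)" unfolding reduced_def
  proof (intro allI impI)
    fix i assume i: "Suc i < length (a # w)"
    show "\<not> canceling ((a # w) ! i) ((a # w) ! Suc i)"
    proof (cases i)
      case 0 then show ?thesis using h i by (cases w) auto
    next
      case (Suc j) then show ?thesis using h i unfolding reduced_def by auto
    qed
  qed
qed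

lemma reduced_tl: "reduced (a # w) \<Longrightarrow> reduced w"
  using reduced_Cons by blast

lemma step_reduced: "reduced r \<Longrightarrow> reduced (step a r)"
  by (cases r) (auto simp: step_Cons reduced_Cons)

lemma foldr_step_reduced: "reduced acc \<Longrightarrow> reduced (foldr step x acc)"
  by (induction x) (auto intro: step_reduced)

lemma reduced_reduce: "reduced (reduce w)"
  by (simp add: reduce_foldr foldr_step_reduced)

lemma reduce_reduced: "reduced w \<Longrightarrow> reduce w = w"
proof (induction w)
  case (Cons a w)
  then have "reduced w" "w = [] \<or> \<not> canceling a (hd w)" using reduced_Cons by blast+
  with Cons show ?case by (cases w) (auto simp: reduce_Cons step_Cons)
qed simp

lemma canceling_trans: "canceling a y \<Longrightarrow> canceling y y' \<Longrightarrow> a = y'"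
  by (cases a; cases y; cases y') (auto simp: canceling_def)

lemma step_step_cancel:
  assumes c: "canceling a y" and z: "reduced z"
  shows "step a (step y z) = z"
proof (cases z)
  case Nil then show ?thesis using c by (simp add: step_Cons)
next
  case (Cons y' zs)
  show ?thesis
  proof (cases "canceling y y'")
    case True
    then have "a = y'" using c canceling_trans by blast
    moreover have "zs = [] \<or> \<not> canceling y' (hd zs)" using z Cons reduced_Cons by blast
    ultimately show ?thesis using Cons True by (cases zs) (auto simp: step_Cons)
  next
    case False then show ?thesis using Cons c by (simp add: step_Cons)
  qed
qed

lemma step_foldr:
  assumes r: "reduced r" and acc: "reduced acc"
  shows "step a (foldr step r acc) = foldr step (step a r) acc"
proof (cases r)
  case Nil then show ?thesis by simp
next
  case (Cons y ys)
  show ?thesis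
  proof (cases "canceling a y")
    case True
    have "reduced (foldr step ys acc)" using acc foldr_step_reduced by blast
    then have "step a (step y (foldr step ys acc)) = foldr step ys acc"
      using step_step_cancel[OF True] by blast
    then show ?thesis using Cons True by (simp add: step_Cons)
  next
    case False then show ?thesis using Cons by (simp add: step_Cons)
  qed
qed

lemma foldr_reduce: "reduced acc \<Longrightarrow> foldr step x acc = foldr step (reduce x) acc"
proof (induction x)
  case (Cons a x)
  have "foldr step (a # x) acc = step a (foldr step (reduce x) acc)" using Cons by simp
  also have "\<dots> = foldr step (step a (reduce x)) acc"
    using step_foldr[OF reduced_reduce Cons.prems] by blast
  finally show ?case by (simp add: reduce_Cons)
qed simp

lemma reduce_append: "reduce (x @ y) = foldr step x (reduce y)"
  by (simp add: reduce_foldr)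

lemma reduce_reduce_left: "reduce (reduce x @ y) = reduce (x @ y)"
  by (simp add: reduce_append foldr_reduce[OF reduced_reduce, symmetric])

lemma reduce_reduce_right: "reduce (x @ reduce y) = reduce (x @ y)"
  by (simp add: reduce_append reduce_reduced[OF reduced_reduce])

lemma reduce_idem[simp]: "reduce (reduce x) = reduce x"
  by (simp add: reduce_reduced reduced_reduce)

definition lmap :: "('a \<Rightarrow> 'b) \<Rightarrow> 'a \<times> bool \<Rightarrow> 'b \<times> bool" where
  "lmap f = (\<lambda>(x, b). (f x, b))"

lemma lmap_canceling: "canceling a y \<Longrightarrow> canceling (lmap f a) (lmap f y)"
  by (cases a; cases y) (auto simp: canceling_def lmap_def)

lemma reduce_map_reduce: "reduce (map (lmap f) (reduce w)) = reduce (map (lmap f) w)"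
proof (induction w)
  case (Cons a w)
  show ?case
  proof (cases "reduce w")
    case Nil
    then show ?thesis using Cons by (simp add: reduce_Cons)
  next
    case Cons2: (Cons y ys)
    show ?thesis
    proof (cases "canceling a y")
      case True
      have "reduce (map (lmap f) (a # w)) = step (lmap f a) (reduce (map (lmap f) (reduce w)))"
        using Cons.IH by (simp add: reduce_Cons)
      also have "\<dots> = step (lmap f a) (step (lmap f y) (reduce (map (lmap f) ys)))"
        using Cons2 by (simp add: reduce_Cons)
      also have "\<dots> = reduce (map (lmap f) ys)"
        using step_step_cancel[OF lmap_canceling[OF True] reduced_reduce] by blast
      finally show ?thesis using Cons2 True by (simp add: reduce_Cons step_Cons)
    next
      case False
      have "reduce (map (lmap f) (reduce (a # w))) = step (lmap f a) (reduce (map (lmap f) (reduce w)))"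
        using Cons2 False by (simp add: reduce_Cons step_Cons)
      then show ?thesis using Cons.IH by (simp add: reduce_Cons)
    qed
  qed
qed simp

lemma set_step: "set (step a r) \<subseteq> insert a (set r)"
  by (cases r) (auto simp: step_Cons)

lemma set_reduce: "set (reduce w) \<subseteq> set w"
  by (induction w) (use set_step in \<open>fastforce simp: reduce_Cons\<close>)+

lemma map_lmap_comp: "map (lmap f) (map (lmap g) w) = map (lmap (f \<circ> g)) w"
  by (auto simp: lmap_def split: prod.splits)



definition lc :: "('g,'m) monoid_scheme \<Rightarrow> 'g \<Rightarrow> 'g set \<Rightarrow> 'g set" where
  "lc G a K = (\<lambda>k. a \<otimes>\<^bsub>G\<^esub> k) ` K"

definition kopen :: "('g,'m) monoid_scheme \<Rightarrow> 'g set set \<Rightarrow> 'g set \<Rightarrow> bool" where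
  "kopen G \<K> W \<longleftrightarrow> W \<subseteq> carrier G \<and> (\<forall>p\<in>W. \<exists>K\<in>\<K>. lc G p K \<subseteq> W)"

definition ktop :: "('g,'m) monoid_scheme \<Rightarrow> 'g set set \<Rightarrow> 'g topology" where
  "ktop G \<K> = topology (kopen G \<K>)"

lemma lc_iff: "x \<in> lc G a K \<longleftrightarrow> (\<exists>k\<in>K. x = a \<otimes>\<^bsub>G\<^esub> k)"
  unfolding lc_def by blast

lemma (in group) cancel1: "x \<in> carrier G \<Longrightarrow> y \<in> carrier G \<Longrightarrow> x \<otimes> (inv x \<otimes> y) = y"
  by (simp add: m_assoc[symmetric])

lemma (in group) cancel2: "x \<in> carrier G \<Longrightarrow> y \<in> carrier G \<Longrightarrow> inv x \<otimes> (x \<otimes> y) = y"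
  by (simp add: m_assoc[symmetric])

locale kgroup = group G for G (structure) +
  fixes \<K>
  assumes sub: "\<And>K. K \<in> \<K> \<Longrightarrow> subgroup K G"
    and ne: "\<K> \<noteq> {}"
    and dir: "\<And>K1 K2. K1 \<in> \<K> \<Longrightarrow> K2 \<in> \<K> \<Longrightarrow> \<exists>K3\<in>\<K>. K3 \<subseteq> K1 \<inter> K2"
    and conj: "\<And>K g. K \<in> \<K> \<Longrightarrow> g \<in> carrier G \<Longrightarrow> \<exists>K'\<in>\<K>. \<forall>k\<in>K'. g \<otimes> k \<otimes> inv g \<in> K"
begin

lemma subK: "K \<in> \<K> \<Longrightarrow> K \<subseteq> carrier G"
  by (rule subgroup.subset[OF sub])

lemma istop: "istopology (kopen G \<K>)"
  unfolding istopology_def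
proof (intro conjI allI impI)
  fix S T assume h: "kopen G \<K> S" "kopen G \<K> T"
  show "kopen G \<K> (S \<inter> T)" unfolding kopen_def
  proof (intro conjI ballI)
    show "S \<inter> T \<subseteq> carrier G" using h unfolding kopen_def by blast
    fix p assume p: "p \<in> S \<inter> T"
    obtain K1 where K1: "K1 \<in> \<K>" "lc G p K1 \<subseteq> S" using h p unfolding kopen_def by blast
    obtain K2 where K2: "K2 \<in> \<K>" "lc G p K2 \<subseteq> T" using h p unfolding kopen_def by blast
    obtain K3 where K3: "K3 \<in> \<K>" "K3 \<subseteq> K1 \<inter> K2" using dir K1 K2 by blast
    have "lc G p K3 \<subseteq> lc G p K1" "lc G p K3 \<subseteq> lc G p K2" using K3 unfolding lc_def by auto
    then show "\<exists>K\<in>\<K>. lc G p K \<subseteq> S \<inter> T" using K1 K2 K3 by blast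
  qed
next
  fix \<F> assume h: "\<forall>S\<in>\<F>. kopen G \<K> S"
  show "kopen G \<K> (\<Union>\<F>)" unfolding kopen_def
  proof (intro conjI ballI)
    show "\<Union>\<F> \<subseteq> carrier G" using h unfolding kopen_def by blast
    fix p assume "p \<in> \<Union>\<F>"
    then obtain S where S: "S \<in> \<F>" "p \<in> S" by blast
    then obtain K where "K \<in> \<K>" "lc G p K \<subseteq> S" using h unfolding kopen_def by blast
    then show "\<exists>K\<in>\<K>. lc G p K \<subseteq> \<Union>\<F>" using S by blast
  qed
qed

lemma openin_ktop: "openin (ktop G \<K>) W \<longleftrightarrow> kopen G \<K> W"
  unfolding ktop_def using istop by (simp add: topology_inverse')

lemma lc_carrier: "K \<in> \<K> \<Longrightarrow> p \<in> carrier G \<Longrightarrow> lc G p K \<subseteq> carrier G"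
  unfolding lc_def using subK by blast

lemma open_carrier: "kopen G \<K> (carrier G)"
proof -
  obtain K where K: "K \<in> \<K>" using ne by blast
  have "\<forall>p\<in>carrier G. \<exists>K\<in>\<K>. lc G p K \<subseteq> carrier G"
  proof
    fix p assume "p \<in> carrier G"
    then have "lc G p K \<subseteq> carrier G" by (rule lc_carrier[OF K])
    then show "\<exists>K\<in>\<K>. lc G p K \<subseteq> carrier G" using K by blast
  qed
  then show ?thesis unfolding kopen_def by simp
qed

lemma topspace_ktop: "topspace (ktop G \<K>) = carrier G"
proof (rule antisym)
  show "topspace (ktop G \<K>) \<subseteq> carrier G"
  proof
    fix x assume "x \<in> topspace (ktop G \<K>)"
    then obtain W where W: "openin (ktop G \<K>) W" "x \<in> W" by (auto simp: topspace_def)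
    then have "W \<subseteq> carrier G" by (simp add: openin_ktop kopen_def)
    then show "x \<in> carrier G" using W(2) by (rule subsetD)
  qed
  have "openin (ktop G \<K>) (carrier G)" by (simp add: openin_ktop open_carrier)
  then show "carrier G \<subseteq> topspace (ktop G \<K>)" by (rule openin_subset)
qed

lemma lc_open: assumes K: "K \<in> \<K>" and a: "a \<in> carrier G" shows "kopen G \<K> (lc G a K)"
proof -
  have c: "lc G a K \<subseteq> carrier G" by (rule lc_carrier[OF K a])
  have L: "q \<in> lc G a K" if p: "p \<in> lc G a K" and q: "q \<in> lc G p K" for p q
  proof -
    obtain k where k: "k \<in> K" "p = a \<otimes> k" using p unfolding lc_iff by blast
    obtain k' where k': "k' \<in> K" "q = p \<otimes> k'" using q unfolding lc_iff by blast
    have kc: "k \<in> carrier G" "k' \<in> carrier G" using k(1) k'(1) subK[OF K] by auto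
    have "q = (a \<otimes> k) \<otimes> k'" using k(2) k'(2) by simp
    also have "\<dots> = a \<otimes> (k \<otimes> k')" using a kc by (rule m_assoc)
    finally have e: "q = a \<otimes> (k \<otimes> k')" .
    have "k \<otimes> k' \<in> K" by (rule subgroup.m_closed[OF sub[OF K] k(1) k'(1)])
    then show ?thesis using e unfolding lc_iff by blast
  qed
  show ?thesis unfolding kopen_def
  proof (intro conjI ballI)
    show "lc G a K \<subseteq> carrier G" by (rule c)
    fix p assume "p \<in> lc G a K"
    then have "lc G p K \<subseteq> lc G a K" using L by blast
    with K show "\<exists>K'\<in>\<K>. lc G p K' \<subseteq> lc G a K" by blast
  qed
qed

lemma one_lc: assumes "K \<in> \<K>" shows "lc G \<one> K = K"
proof -
  have "\<And>k. k \<in> K \<Longrightarrow> \<one> \<otimes> k = k" using subK[OF assms] by auto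
  then show ?thesis unfolding lc_def by (simp add: image_cong)
qed

lemma K_open: "K \<in> \<K> \<Longrightarrow> openin (ktop G \<K>) K"
  using lc_open[of K \<one>] one_lc by (simp add: openin_ktop)

lemma mem_lc: assumes "K \<in> \<K>" "a \<in> carrier G" shows "a \<in> lc G a K"
proof -
  have "\<one> \<in> K" by (rule subgroup.one_closed[OF sub[OF assms(1)]])
  moreover have "a = a \<otimes> \<one>" using assms by simp
  ultimately show ?thesis unfolding lc_def by blast
qed

lemma cont_mult: "continuous_map (prod_topology (ktop G \<K>) (ktop G \<K>)) (ktop G \<K>) (\<lambda>p. fst p \<otimes> snd p)"
  unfolding continuous_map
proof (intro conjI allI impI)
  show "(\<lambda>p. fst p \<otimes> snd p) ` topspace (prod_topology (ktop G \<K>) (ktop G \<K>)) \<subseteq> topspace (ktop G \<K>)"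
    by (auto simp: topspace_ktop)
  fix U assume U: "openin (ktop G \<K>) U"
  show "openin (prod_topology (ktop G \<K>) (ktop G \<K>))
          {x \<in> topspace (prod_topology (ktop G \<K>) (ktop G \<K>)). fst x \<otimes> snd x \<in> U}"
    unfolding openin_prod_topology_alt
  proof (intro allI impI)
    fix a b assume ab: "(a, b) \<in> {x \<in> topspace (prod_topology (ktop G \<K>) (ktop G \<K>)). fst x \<otimes> snd x \<in> U}"
    then have a: "a \<in> carrier G" and b: "b \<in> carrier G" and abU: "a \<otimes> b \<in> U"
      by (auto simp: topspace_ktop)
    have "kopen G \<K> U" using U by (simp add: openin_ktop)
    then obtain K where K: "K \<in> \<K>" "lc G (a \<otimes> b) K \<subseteq> U" using abU unfolding kopen_def by blast
    obtain K1 where K1: "K1 \<in> \<K>" "\<forall>k\<in>K1. inv b \<otimes> k \<otimes> inv (inv b) \<in> K"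
      using conj[OF K(1) inv_closed[OF b]] by blast
    have sub: "lc G a K1 \<times> lc G b K \<subseteq> {x \<in> topspace (prod_topology (ktop G \<K>) (ktop G \<K>)). fst x \<otimes> snd x \<in> U}"
    proof
      fix q assume "q \<in> lc G a K1 \<times> lc G b K"
      then have q1: "fst q \<in> lc G a K1" and q2: "snd q \<in> lc G b K" by auto
      obtain k1 where k1: "k1 \<in> K1" "fst q = a \<otimes> k1" using q1 unfolding lc_iff by blast
      obtain k2 where k2: "k2 \<in> K" "snd q = b \<otimes> k2" using q2 unfolding lc_iff by blast
      have k1c: "k1 \<in> carrier G" using k1(1) subK[OF K1(1)] by auto
      have k2c: "k2 \<in> carrier G" using k2(1) subK[OF K(1)] by auto
      have c: "inv b \<otimes> k1 \<otimes> b \<in> K" using K1(2) k1(1) b by simp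
      have "(a \<otimes> k1) \<otimes> (b \<otimes> k2) = (a \<otimes> b) \<otimes> ((inv b \<otimes> k1 \<otimes> b) \<otimes> k2)"
        using a b k1c k2c by (simp add: m_assoc cancel1)
      moreover have "(inv b \<otimes> k1 \<otimes> b) \<otimes> k2 \<in> K" by (rule subgroup.m_closed[OF sub[OF K(1)] c k2(1)])
      ultimately have "(a \<otimes> k1) \<otimes> (b \<otimes> k2) \<in> lc G (a \<otimes> b) K" unfolding lc_iff by blast
      then have "fst q \<otimes> snd q \<in> U" using K(2) k1(2) k2(2) by auto
      moreover have "fst q \<in> carrier G" "snd q \<in> carrier G" using k1(2) k2(2) a b k1c k2c by auto
      ultimately show "q \<in> {x \<in> topspace (prod_topology (ktop G \<K>) (ktop G \<K>)). fst x \<otimes> snd x \<in> U}"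
        by (cases q) (simp add: topspace_ktop)
    qed
    have o1: "openin (ktop G \<K>) (lc G a K1)" using lc_open[OF K1(1) a] by (simp add: openin_ktop)
    have o2: "openin (ktop G \<K>) (lc G b K)" using lc_open[OF K(1) b] by (simp add: openin_ktop)
    show "\<exists>U' V. openin (ktop G \<K>) U' \<and> openin (ktop G \<K>) V \<and> a \<in> U' \<and> b \<in> V \<and> U' \<times> V \<subseteq>
       {x \<in> topspace (prod_topology (ktop G \<K>) (ktop G \<K>)). fst x \<otimes> snd x \<in> U}"
      using sub o1 o2 mem_lc[OF K1(1) a] mem_lc[OF K(1) b] by blast
  qed
qed

lemma cont_inv: "continuous_map (ktop G \<K>) (ktop G \<K>) (\<lambda>x. inv x)"
  unfolding continuous_map
proof (intro conjI allI impI)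
  show "(\<lambda>x. inv x) ` topspace (ktop G \<K>) \<subseteq> topspace (ktop G \<K>)" by (auto simp: topspace_ktop)
  fix U assume U: "openin (ktop G \<K>) U"
  show "openin (ktop G \<K>) {x \<in> topspace (ktop G \<K>). inv x \<in> U}"
    unfolding openin_ktop kopen_def
  proof (intro conjI ballI)
    show "{x \<in> topspace (ktop G \<K>). inv x \<in> U} \<subseteq> carrier G" by (auto simp: topspace_ktop)
    fix a assume "a \<in> {x \<in> topspace (ktop G \<K>). inv x \<in> U}"
    then have a: "a \<in> carrier G" "inv a \<in> U" by (auto simp: topspace_ktop)
    have "kopen G \<K> U" using U by (simp add: openin_ktop)
    then obtain K where K: "K \<in> \<K>" "lc G (inv a) K \<subseteq> U" using a(2) unfolding kopen_def by blast
    obtain K1 where K1: "K1 \<in> \<K>" "\<forall>k\<in>K1. a \<otimes> k \<otimes> inv a \<in> K" using conj[OF K(1) a(1)] by blast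
    have "lc G a K1 \<subseteq> {x \<in> topspace (ktop G \<K>). inv x \<in> U}"
    proof
      fix q assume "q \<in> lc G a K1"
      then obtain k where k: "k \<in> K1" "q = a \<otimes> k" unfolding lc_iff by blast
      have kc: "k \<in> carrier G" using k(1) subK[OF K1(1)] by auto
      have "inv q = inv a \<otimes> (a \<otimes> inv k \<otimes> inv a)"
        using a kc k by (simp add: inv_mult_group m_assoc[symmetric])
      moreover have "a \<otimes> inv k \<otimes> inv a \<in> K"
      proof -
        have "a \<otimes> k \<otimes> inv a \<in> K" using K1(2) k(1) by blast
        then have "inv (a \<otimes> k \<otimes> inv a) \<in> K" by (rule subgroup.m_inv_closed[OF sub[OF K(1)]])
        moreover have "inv (a \<otimes> k \<otimes> inv a) = a \<otimes> inv k \<otimes> inv a"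
          using a kc by (simp add: inv_mult_group m_assoc)
        ultimately show ?thesis by simp
      qed
      ultimately have "inv q \<in> lc G (inv a) K" unfolding lc_iff by blast
      then have "inv q \<in> U" using K(2) by blast
      then show "q \<in> {x \<in> topspace (ktop G \<K>). inv x \<in> U}" using k a kc by (auto simp: topspace_ktop)
    qed
    then show "\<exists>K\<in>\<K>. lc G a K \<subseteq> {x \<in> topspace (ktop G \<K>). inv x \<in> U}" using K1(1) by blast
  qed
qed

lemma topgroup: "topgroup G (ktop G \<K>)"
  unfolding topgroup_def using cont_mult cont_inv topspace_ktop is_group by blast

lemma nbhd1_iff: "nbhd1 G (ktop G \<K>) V \<longleftrightarrow> V \<subseteq> carrier G \<and> (\<exists>K\<in>\<K>. K \<subseteq> V)"
proof
  assume "nbhd1 G (ktop G \<K>) V"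
  then obtain W where W: "V \<subseteq> carrier G" "openin (ktop G \<K>) W" "\<one> \<in> W" "W \<subseteq> V"
    unfolding nbhd1_def by (auto simp: topspace_ktop)
  have "kopen G \<K> W" using W(2) by (simp add: openin_ktop)
  then obtain K where K: "K \<in> \<K>" "lc G \<one> K \<subseteq> W" using W(3) unfolding kopen_def by blast
  then have "K \<subseteq> V" using W(4) one_lc[OF K(1)] by simp
  then show "V \<subseteq> carrier G \<and> (\<exists>K\<in>\<K>. K \<subseteq> V)" using W(1) K(1) by blast
next
  assume "V \<subseteq> carrier G \<and> (\<exists>K\<in>\<K>. K \<subseteq> V)"
  then obtain K where KV: "V \<subseteq> carrier G" "K \<in> \<K>" "K \<subseteq> V" by blast
  have "\<one> \<in> K" by (rule subgroup.one_closed[OF sub[OF KV(2)]])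
  then show "nbhd1 G (ktop G \<K>) V" unfolding nbhd1_def topspace_ktop
    using K_open[OF KV(2)] KV by blast
qed

lemma nonarch: "nonarch_group G (ktop G \<K>)"
  unfolding nonarch_group_def
proof (intro conjI allI impI)
  show "topgroup G (ktop G \<K>)" by (rule topgroup)
  fix V assume "nbhd1 G (ktop G \<K>) V"
  then obtain K where K: "K \<in> \<K>" "K \<subseteq> V" unfolding nbhd1_iff by blast
  have "subgroup K G" by (rule sub[OF K(1)])
  moreover have "openin (ktop G \<K>) K" by (rule K_open[OF K(1)])
  ultimately show "\<exists>H. subgroup H G \<and> openin (ktop G \<K>) H \<and> H \<subseteq> V" using K(2) by blast
qed

lemma hausdorff:
  assumes sep: "\<And>x. x \<in> carrier G \<Longrightarrow> (\<forall>K\<in>\<K>. x \<in> K) \<Longrightarrow> x = \<one>"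
  shows "Hausdorff_space (ktop G \<K>)"
  unfolding Hausdorff_space_def topspace_ktop
proof (intro allI impI)
  fix a b assume h: "a \<in> carrier G \<and> b \<in> carrier G \<and> a \<noteq> b"
  have hb: "b \<in> carrier G" and ha: "a \<in> carrier G" using h by auto
  have "inv a \<otimes> b \<noteq> \<one>" using h by (metis inv_equality l_inv_ex inv_inv)
  moreover have "inv a \<otimes> b \<in> carrier G" using h by simp
  ultimately have "\<not> (\<forall>K\<in>\<K>. inv a \<otimes> b \<in> K)" using sep by metis
  then obtain K where K: "K \<in> \<K>" "inv a \<otimes> b \<notin> K" by blast
  have "disjnt (lc G a K) (lc G b K)"
    unfolding disjnt_def
  proof (rule ccontr)
    assume "lc G a K \<inter> lc G b K \<noteq> {}"
    then obtain q where q: "q \<in> lc G a K" "q \<in> lc G b K" by blast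
    obtain k1 where k1: "k1 \<in> K" "q = a \<otimes> k1" using q(1) unfolding lc_iff by blast
    obtain k2 where k2: "k2 \<in> K" "q = b \<otimes> k2" using q(2) unfolding lc_iff by blast
    have kc: "k1 \<in> carrier G" "k2 \<in> carrier G" using k1(1) k2(1) subK[OF K(1)] by auto
    have "b = b \<otimes> k2 \<otimes> inv k2" using kc hb by (simp add: m_assoc)
    also have "\<dots> = a \<otimes> k1 \<otimes> inv k2" using k1(2) k2(2) by simp
    finally have "inv a \<otimes> b = inv a \<otimes> (a \<otimes> k1 \<otimes> inv k2)" by simp
    also have "\<dots> = k1 \<otimes> inv k2" using ha kc by (simp add: m_assoc[symmetric])
    finally have "inv a \<otimes> b = k1 \<otimes> inv k2" .
    moreover have "k1 \<otimes> inv k2 \<in> K" by (rule subgroup.m_closed[OF sub[OF K(1)] k1(1) subgroup.m_inv_closed[OF sub[OF K(1)] k2(1)]])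
    ultimately show False using K by simp
  qed
  moreover have "openin (ktop G \<K>) (lc G a K)" "openin (ktop G \<K>) (lc G b K)"
    using lc_open[OF K(1) ha] lc_open[OF K(1) hb] by (simp_all add: openin_ktop)
  ultimately show "\<exists>U V. openin (ktop G \<K>) U \<and> openin (ktop G \<K>) V \<and> a \<in> U \<and> b \<in> V \<and> disjnt U V"
    using mem_lc[OF K(1) ha] mem_lc[OF K(1) hb] by blast
qed

lemma balanced:
  assumes nrm: "\<And>K. K \<in> \<K> \<Longrightarrow> K \<lhd> G"
  shows "balanced_group G (ktop G \<K>)"
proof -
  have swap: "inv g \<otimes> h \<in> K \<longleftrightarrow> h \<otimes> inv g \<in> K"
    if K: "K \<in> \<K>" and g: "g \<in> carrier G" and h: "h \<in> carrier G" for g h K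
  proof
    assume "inv g \<otimes> h \<in> K"
    then have "g \<otimes> (inv g \<otimes> h) \<otimes> inv g \<in> K" by (rule normal.inv_op_closed2[OF nrm[OF K] g])
    then show "h \<otimes> inv g \<in> K" using g h by (simp add: m_assoc[symmetric])
  next
    assume "h \<otimes> inv g \<in> K"
    then have "inv g \<otimes> (h \<otimes> inv g) \<otimes> inv (inv g) \<in> K" by (rule normal.inv_op_closed2[OF nrm[OF K] inv_closed[OF g]])
    then show "inv g \<otimes> h \<in> K" using g h by (simp add: m_assoc)
  qed
  have nbK: "nbhd1 G (ktop G \<K>) K" if K: "K \<in> \<K>" for K
    using K subK[OF K] unfolding nbhd1_iff by blast
  have LR: "E \<in> right_unif G (ktop G \<K>)" if E: "E \<in> left_unif G (ktop G \<K>)" for E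
  proof -
    from E obtain V where V: "E \<subseteq> carrier G \<times> carrier G" "nbhd1 G (ktop G \<K>) V"
      "{(g,h). g \<in> carrier G \<and> h \<in> carrier G \<and> inv g \<otimes> h \<in> V} \<subseteq> E"
      unfolding left_unif_def by blast
    from V(2) obtain K where K: "K \<in> \<K>" "K \<subseteq> V" unfolding nbhd1_iff by blast
    have "{(g,h). g \<in> carrier G \<and> h \<in> carrier G \<and> h \<otimes> inv g \<in> K} \<subseteq> E"
    proof (intro subsetI, clarify)
      fix g h assume gh: "g \<in> carrier G" "h \<in> carrier G" "h \<otimes> inv g \<in> K"
      then have "inv g \<otimes> h \<in> V" using swap[OF K(1) gh(1,2)] K(2) by blast
      then show "(g, h) \<in> E" using V(3) gh by blast
    qed
    then show ?thesis unfolding right_unif_def using V(1) nbK[OF K(1)] by blast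
  qed
  have RL: "E \<in> left_unif G (ktop G \<K>)" if E: "E \<in> right_unif G (ktop G \<K>)" for E
  proof -
    from E obtain V where V: "E \<subseteq> carrier G \<times> carrier G" "nbhd1 G (ktop G \<K>) V"
      "{(g,h). g \<in> carrier G \<and> h \<in> carrier G \<and> h \<otimes> inv g \<in> V} \<subseteq> E"
      unfolding right_unif_def by blast
    from V(2) obtain K where K: "K \<in> \<K>" "K \<subseteq> V" unfolding nbhd1_iff by blast
    have "{(g,h). g \<in> carrier G \<and> h \<in> carrier G \<and> inv g \<otimes> h \<in> K} \<subseteq> E"
    proof (intro subsetI, clarify)
      fix g h assume gh: "g \<in> carrier G" "h \<in> carrier G" "inv g \<otimes> h \<in> K"
      then have "h \<otimes> inv g \<in> V" using swap[OF K(1) gh(1,2)] K(2) by blast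
      then show "(g, h) \<in> E" using V(3) gh by blast
    qed
    then show ?thesis unfolding left_unif_def using V(1) nbK[OF K(1)] by blast
  qed
  show ?thesis unfolding balanced_group_def using LR RL by blast
qed

end



lemma (in group) conj_preimage_subgroup:
  assumes H: "subgroup H G" and g: "g \<in> carrier G"
  shows "subgroup {k \<in> carrier G. g \<otimes> k \<otimes> inv g \<in> H} G"
proof (rule subgroupI)
  show "{k \<in> carrier G. g \<otimes> k \<otimes> inv g \<in> H} \<subseteq> carrier G" by blast
  have "g \<otimes> \<one> \<otimes> inv g \<in> H" using g subgroup.one_closed[OF H] by simp
  then show "{k \<in> carrier G. g \<otimes> k \<otimes> inv g \<in> H} \<noteq> {}" by blast
next
  fix a assume "a \<in> {k \<in> carrier G. g \<otimes> k \<otimes> inv g \<in> H}"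
  then have a: "a \<in> carrier G" "g \<otimes> a \<otimes> inv g \<in> H" by auto
  have "inv (g \<otimes> a \<otimes> inv g) \<in> H" by (rule subgroup.m_inv_closed[OF H a(2)])
  moreover have "inv (g \<otimes> a \<otimes> inv g) = g \<otimes> inv a \<otimes> inv g"
    using a g by (simp add: inv_mult_group m_assoc)
  ultimately show "inv a \<in> {k \<in> carrier G. g \<otimes> k \<otimes> inv g \<in> H}" using a by simp
next
  fix a b assume "a \<in> {k \<in> carrier G. g \<otimes> k \<otimes> inv g \<in> H}" "b \<in> {k \<in> carrier G. g \<otimes> k \<otimes> inv g \<in> H}"
  then have a: "a \<in> carrier G" "g \<otimes> a \<otimes> inv g \<in> H" and b: "b \<in> carrier G" "g \<otimes> b \<otimes> inv g \<in> H" by auto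
  have "(g \<otimes> a \<otimes> inv g) \<otimes> (g \<otimes> b \<otimes> inv g) \<in> H" by (rule subgroup.m_closed[OF H a(2) b(2)])
  moreover have "(g \<otimes> a \<otimes> inv g) \<otimes> (g \<otimes> b \<otimes> inv g) = g \<otimes> (a \<otimes> b) \<otimes> inv g"
    using a b g by (simp add: m_assoc cancel2)
  ultimately show "a \<otimes> b \<in> {k \<in> carrier G. g \<otimes> k \<otimes> inv g \<in> H}" using a b by simp
qed

definition qimg :: "('g, 'm) monoid_scheme \<Rightarrow> 'g set \<Rightarrow> 'g set set \<Rightarrow> 'g set set set" where
  "qimg G N \<K>0 = (\<lambda>K. (\<lambda>a. N #>\<^bsub>G\<^esub> a) ` K) ` \<K>0"

lemma (in normal) pi_hom: "group_hom G (G Mod H) (\<lambda>a. H #> a)"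
  apply (rule group_hom.intro)
  using is_group apply blast
  using factorgroup_is_group apply blast
  apply (simp add: group_hom_axioms_def r_coset_hom_Mod)
  done

lemma (in normal) quot_kgroup:
  assumes sub0: "\<And>K. K \<in> \<K>0 \<Longrightarrow> subgroup K G" and ne0: "\<K>0 \<noteq> {}"
    and dir0: "\<And>K1 K2. K1 \<in> \<K>0 \<Longrightarrow> K2 \<in> \<K>0 \<Longrightarrow> \<exists>K3\<in>\<K>0. K3 \<subseteq> K1 \<inter> K2"
    and conj0: "\<And>K g. K \<in> \<K>0 \<Longrightarrow> g \<in> carrier G \<Longrightarrow> \<exists>K'\<in>\<K>0. \<forall>k\<in>K'. g \<otimes> k \<otimes> inv g \<in> K"
  shows "kgroup (G Mod H) (qimg G H \<K>0)"
proof -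
  interpret gh: group_hom G "G Mod H" "\<lambda>a. H #> a" by (rule pi_hom)
  show ?thesis
  proof (intro kgroup.intro kgroup_axioms.intro)
    show "group (G Mod H)" by (rule factorgroup_is_group)
  next
    fix K assume "K \<in> qimg G H \<K>0"
    then obtain K0 where K0: "K0 \<in> \<K>0" "K = (\<lambda>a. H #> a) ` K0" unfolding qimg_def by blast
    show "subgroup K (G Mod H)" unfolding K0(2) by (rule gh.subgroup_img_is_subgroup[OF sub0[OF K0(1)]])
  next
    show "qimg G H \<K>0 \<noteq> {}" using ne0 unfolding qimg_def by blast
  next
    fix K1 K2 assume "K1 \<in> qimg G H \<K>0" "K2 \<in> qimg G H \<K>0"
    then obtain L1 L2 where L: "L1 \<in> \<K>0" "K1 = (\<lambda>a. H #> a) ` L1" "L2 \<in> \<K>0" "K2 = (\<lambda>a. H #> a) ` L2"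
      unfolding qimg_def by blast
    obtain L3 where L3: "L3 \<in> \<K>0" "L3 \<subseteq> L1 \<inter> L2" using dir0[OF L(1) L(3)] by blast
    have "(\<lambda>a. H #> a) ` L3 \<subseteq> K1 \<inter> K2" using L3(2) L(2) L(4) by blast
    moreover have "(\<lambda>a. H #> a) ` L3 \<in> qimg G H \<K>0" using L3(1) unfolding qimg_def by blast
    ultimately show "\<exists>K3\<in>qimg G H \<K>0. K3 \<subseteq> K1 \<inter> K2" by blast
  next
    fix K g assume K: "K \<in> qimg G H \<K>0" and g: "g \<in> carrier (G Mod H)"
    then obtain L where L: "L \<in> \<K>0" "K = (\<lambda>a. H #> a) ` L" unfolding qimg_def by blast
    obtain g0 where g0: "g0 \<in> carrier G" "g = H #> g0" using g unfolding carrier_FactGroup by blast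
    obtain L' where L': "L' \<in> \<K>0" "\<forall>k\<in>L'. g0 \<otimes> k \<otimes> inv g0 \<in> L" using conj0[OF L(1) g0(1)] by blast
    have "\<forall>k\<in>(\<lambda>a. H #> a) ` L'. g \<otimes>\<^bsub>G Mod H\<^esub> k \<otimes>\<^bsub>G Mod H\<^esub> inv\<^bsub>G Mod H\<^esub> g \<in> K"
    proof
      fix k assume "k \<in> (\<lambda>a. H #> a) ` L'"
      then obtain k0 where k0: "k0 \<in> L'" "k = H #> k0" by blast
      have k0c: "k0 \<in> carrier G" using k0(1) subgroup.subset[OF sub0[OF L'(1)]] by blast
      have "g \<otimes>\<^bsub>G Mod H\<^esub> k \<otimes>\<^bsub>G Mod H\<^esub> inv\<^bsub>G Mod H\<^esub> g = H #> (g0 \<otimes> k0 \<otimes> inv g0)"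
        using g0 k0 k0c by simp
      moreover have "g0 \<otimes> k0 \<otimes> inv g0 \<in> L" using L'(2) k0(1) by blast
      ultimately show "g \<otimes>\<^bsub>G Mod H\<^esub> k \<otimes>\<^bsub>G Mod H\<^esub> inv\<^bsub>G Mod H\<^esub> g \<in> K" using L(2) by simp
    qed
    moreover have "(\<lambda>a. H #> a) ` L' \<in> qimg G H \<K>0" using L'(1) unfolding qimg_def by blast
    ultimately show "\<exists>K'\<in>qimg G H \<K>0. \<forall>k\<in>K'. g \<otimes>\<^bsub>G Mod H\<^esub> k \<otimes>\<^bsub>G Mod H\<^esub> inv\<^bsub>G Mod H\<^esub> g \<in> K"
      by blast
  qed
qed

lemma (in normal) coset_preimage:
  assumes K: "subgroup K G" and HK: "H \<subseteq> K" and w: "w \<in> carrier G" and k: "k \<in> K"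
    and eq: "H #> w = H #> k"
  shows "w \<in> K"
proof -
  have "w \<in> H #> w" by (rule rcos_self[OF w subgroup_axioms])
  then have "w \<in> H #> k" using eq by simp
  then obtain h where h: "h \<in> H" "w = h \<otimes> k" unfolding r_coset_def by blast
  have "h \<in> K" using h(1) HK by blast
  then show ?thesis using h(2) subgroup.m_closed[OF K _ k] by simp
qed

lemma (in normal) quot_sep:
  assumes sub0: "\<And>K. K \<in> \<K>0 \<Longrightarrow> subgroup K G" and HK: "\<And>K. K \<in> \<K>0 \<Longrightarrow> H \<subseteq> K"
    and inter: "\<And>x. x \<in> carrier G \<Longrightarrow> (\<forall>K\<in>\<K>0. x \<in> K) \<Longrightarrow> x \<in> H"
    and C: "C \<in> carrier (G Mod H)" and CK: "\<forall>K\<in>qimg G H \<K>0. C \<in> K"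
  shows "C = \<one>\<^bsub>G Mod H\<^esub>"
proof -
  obtain c where c: "c \<in> carrier G" "C = H #> c" using C unfolding carrier_FactGroup by blast
  have "c \<in> K" if K: "K \<in> \<K>0" for K
  proof -
    have "C \<in> (\<lambda>a. H #> a) ` K" using CK K unfolding qimg_def by blast
    then obtain k where k: "k \<in> K" "C = H #> k" by blast
    show ?thesis by (rule coset_preimage[OF sub0[OF K] HK[OF K] c(1) k(1)]) (use c k in simp)
  qed
  then have "c \<in> H" using inter c(1) by blast
  then have "H #> c = H" using coset_join2[OF c(1) subgroup_axioms] by simp
  then show ?thesis using c(2) by simp
qed

locale fg =
  fixes S :: "'a set"
  assumes grp: "group (free_group S)"
begin

abbreviation FF where "FF \<equiv> free_group S"

sublocale F: group FF by (rule grp)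

lemma mem_carrier: "w \<in> carrier FF \<longleftrightarrow> fst ` set w \<subseteq> S \<and> reduced w"
  by (simp add: free_group_def)

lemma mult_FF: "u \<otimes>\<^bsub>FF\<^esub> v = reduce (u @ v)"
  by (simp add: free_group_def)

lemma one_FF: "\<one>\<^bsub>FF\<^esub> = []"
  by (simp add: free_group_def)

lemma ins_carrier: "x \<in> S \<Longrightarrow> ins x \<in> carrier FF"
  by (simp add: mem_carrier ins_def reduced_def)

lemma inv_ins: assumes x: "x \<in> S" shows "inv\<^bsub>FF\<^esub> (ins x) = [(x, False)]"
proof -
  have c: "[(x, False)] \<in> carrier FF" using x by (simp add: mem_carrier reduced_def)
  have "[(x, False)] \<otimes>\<^bsub>FF\<^esub> ins x = \<one>\<^bsub>FF\<^esub>"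
    by (simp add: mult_FF one_FF ins_def reduce_Cons step_Cons canceling_def)
  then show ?thesis using F.inv_equality[OF _ ins_carrier[OF x] c] by simp
qed

lemma gen_all: "w \<in> carrier FF \<Longrightarrow> w \<in> generate FF (ins ` S)"
proof (induction w)
  case Nil then show ?case using generate.one[of FF "ins ` S"] by (simp add: one_FF)
next
  case (Cons a w)
  obtain x b where a: "a = (x, b)" by (cases a)
  have x: "x \<in> S" using Cons.prems a by (simp add: mem_carrier)
  have red: "reduced (a # w)" using Cons.prems by (simp add: mem_carrier)
  have wc: "w \<in> carrier FF" using Cons.prems reduced_tl[OF red] by (simp add: mem_carrier)
  have wg: "w \<in> generate FF (ins ` S)" by (rule Cons.IH[OF wc])
  have eq: "[a] \<otimes>\<^bsub>FF\<^esub> w = a # w" using reduce_reduced[OF red] by (simp add: mult_FF)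
  show ?case
  proof (cases b)
    case True
    then have "[a] = ins x" using a by (simp add: ins_def)
    then have "[a] \<in> generate FF (ins ` S)" using generate.incl[of "ins x" "ins ` S" FF] x by simp
    then show ?thesis using generate.eng[OF _ wg] eq by metis
  next
    case False
    then have "[a] = inv\<^bsub>FF\<^esub> (ins x)" using a inv_ins[OF x] by simp
    then have "[a] \<in> generate FF (ins ` S)" using generate.inv[of "ins x" "ins ` S" FF] x by simp
    then show ?thesis using generate.eng[OF _ wg] eq by metis
  qed
qed

lemma hom_agree:
  assumes H: "group H" and h: "h \<in> hom FF H" and h': "h' \<in> hom FF H"
    and agree: "\<And>x. x \<in> S \<Longrightarrow> h (ins x) = h' (ins x)"
    and w: "w \<in> carrier FF"
  shows "h w = h' w"
proof -
  interpret g1: group_hom FF H h by (rule group_hom.intro[OF grp H]) (simp add: group_hom_axioms_def h)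
  interpret g2: group_hom FF H h' by (rule group_hom.intro[OF grp H]) (simp add: group_hom_axioms_def h')
  have sub: "ins ` S \<subseteq> carrier FF" using ins_carrier by blast
  have "v \<in> generate FF (ins ` S) \<Longrightarrow> h v = h' v" for v
  proof (induction rule: generate.induct)
    case one then show ?case by simp
  next
    case (incl v) then show ?case using agree by blast
  next
    case (inv v) then show ?case using agree sub by auto
  next
    case (eng v1 v2)
    have "v1 \<in> carrier FF" "v2 \<in> carrier FF" using eng.hyps F.generate_in_carrier[OF sub] by blast+
    then show ?case using eng.IH by simp
  qed
  then show ?thesis using gen_all[OF w] by blast
qed

lemma j2_sub: "e \<subseteq> S \<times> S \<Longrightarrow> j2 S e \<subseteq> carrier FF"
  unfolding j2_def using ins_carrier by blast

lemma j2s_sub: "e \<subseteq> S \<times> S \<Longrightarrow> j2s S e \<subseteq> carrier FF"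
  unfolding j2s_def using ins_carrier by blast

lemma eps_tilde_V: "eps_tilde S e = V_psi S (\<lambda>_. e)"
  unfolding eps_tilde_def V_psi_def by simp

lemma V_mem: "w \<in> carrier FF \<Longrightarrow> a \<in> j2 S (\<psi> w) \<union> j2s S (\<psi> w) \<Longrightarrow>
    w \<otimes>\<^bsub>FF\<^esub> a \<otimes>\<^bsub>FF\<^esub> inv\<^bsub>FF\<^esub> w \<in> V_psi S \<psi>"
  unfolding V_psi_def by blast

lemma V_elim: "p \<in> V_psi S \<psi> \<Longrightarrow> \<exists>w a. w \<in> carrier FF \<and> a \<in> j2 S (\<psi> w) \<union> j2s S (\<psi> w) \<and>
    p = w \<otimes>\<^bsub>FF\<^esub> a \<otimes>\<^bsub>FF\<^esub> inv\<^bsub>FF\<^esub> w"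
  unfolding V_psi_def by blast

lemma V_sub: assumes "\<And>w. w \<in> carrier FF \<Longrightarrow> \<psi> w \<subseteq> S \<times> S" shows "V_psi S \<psi> \<subseteq> carrier FF"
proof
  fix p assume "p \<in> V_psi S \<psi>"
  then obtain w a where wa: "w \<in> carrier FF" "a \<in> j2 S (\<psi> w) \<union> j2s S (\<psi> w)"
    "p = w \<otimes>\<^bsub>FF\<^esub> a \<otimes>\<^bsub>FF\<^esub> inv\<^bsub>FF\<^esub> w" using V_elim by blast
  have "a \<in> carrier FF" using wa(2) j2_sub[OF assms[OF wa(1)]] j2s_sub[OF assms[OF wa(1)]] by blast
  then show "p \<in> carrier FF" using wa by simp
qed

lemma j2_mono: "e \<subseteq> e' \<Longrightarrow> j2 S e \<subseteq> j2 S e'" unfolding j2_def by blast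
lemma j2s_mono: "e \<subseteq> e' \<Longrightarrow> j2s S e \<subseteq> j2s S e'" unfolding j2s_def by blast

lemma V_mono: assumes "\<And>w. w \<in> carrier FF \<Longrightarrow> \<psi>1 w \<subseteq> \<psi>2 w" shows "V_psi S \<psi>1 \<subseteq> V_psi S \<psi>2"
proof
  fix p assume "p \<in> V_psi S \<psi>1"
  then obtain w a where wa: "w \<in> carrier FF" "a \<in> j2 S (\<psi>1 w) \<union> j2s S (\<psi>1 w)"
    "p = w \<otimes>\<^bsub>FF\<^esub> a \<otimes>\<^bsub>FF\<^esub> inv\<^bsub>FF\<^esub> w" using V_elim by blast
  have "a \<in> j2 S (\<psi>2 w) \<union> j2s S (\<psi>2 w)"
    using wa(2) j2_mono[OF assms[OF wa(1)]] j2s_mono[OF assms[OF wa(1)]] by blast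
  then show "p \<in> V_psi S \<psi>2" using V_mem[OF wa(1)] wa(3) by simp
qed

lemma conj_V:
  assumes g: "g \<in> carrier FF" and ps: "\<And>w. w \<in> carrier FF \<Longrightarrow> \<psi> w \<subseteq> S \<times> S"
    and k: "k \<in> generate FF (V_psi S (\<lambda>w. \<psi> (g \<otimes>\<^bsub>FF\<^esub> w)))"
  shows "g \<otimes>\<^bsub>FF\<^esub> k \<otimes>\<^bsub>FF\<^esub> inv\<^bsub>FF\<^esub> g \<in> generate FF (V_psi S \<psi>)"
proof -
  let ?H = "generate FF (V_psi S \<psi>)"
  have Hs: "subgroup ?H FF" by (rule F.generate_is_subgroup[OF V_sub[OF ps]])
  let ?P = "{k \<in> carrier FF. g \<otimes>\<^bsub>FF\<^esub> k \<otimes>\<^bsub>FF\<^esub> inv\<^bsub>FF\<^esub> g \<in> ?H}"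
  have Ps: "subgroup ?P FF" by (rule F.conj_preimage_subgroup[OF Hs g])
  have "V_psi S (\<lambda>w. \<psi> (g \<otimes>\<^bsub>FF\<^esub> w)) \<subseteq> ?P"
  proof
    fix p assume "p \<in> V_psi S (\<lambda>w. \<psi> (g \<otimes>\<^bsub>FF\<^esub> w))"
    then obtain w a where wa: "w \<in> carrier FF" "a \<in> j2 S (\<psi> (g \<otimes>\<^bsub>FF\<^esub> w)) \<union> j2s S (\<psi> (g \<otimes>\<^bsub>FF\<^esub> w))"
      "p = w \<otimes>\<^bsub>FF\<^esub> a \<otimes>\<^bsub>FF\<^esub> inv\<^bsub>FF\<^esub> w" using V_elim[of p "\<lambda>w. \<psi> (g \<otimes>\<^bsub>FF\<^esub> w)"] by blast
    have gw: "g \<otimes>\<^bsub>FF\<^esub> w \<in> carrier FF" using g wa(1) by simp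
    have ac: "a \<in> carrier FF" using wa(2) j2_sub[OF ps[OF gw]] j2s_sub[OF ps[OF gw]] by blast
    have "(g \<otimes>\<^bsub>FF\<^esub> w) \<otimes>\<^bsub>FF\<^esub> a \<otimes>\<^bsub>FF\<^esub> inv\<^bsub>FF\<^esub> (g \<otimes>\<^bsub>FF\<^esub> w) \<in> V_psi S \<psi>"
      by (rule V_mem[where \<psi>=\<psi>, OF gw wa(2)])
    moreover have "(g \<otimes>\<^bsub>FF\<^esub> w) \<otimes>\<^bsub>FF\<^esub> a \<otimes>\<^bsub>FF\<^esub> inv\<^bsub>FF\<^esub> (g \<otimes>\<^bsub>FF\<^esub> w) = g \<otimes>\<^bsub>FF\<^esub> p \<otimes>\<^bsub>FF\<^esub> inv\<^bsub>FF\<^esub> g"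
      using g wa(1) ac wa(3) by (simp add: F.inv_mult_group F.m_assoc)
    ultimately have "g \<otimes>\<^bsub>FF\<^esub> p \<otimes>\<^bsub>FF\<^esub> inv\<^bsub>FF\<^esub> g \<in> ?H" using generate.incl by metis
    moreover have "p \<in> carrier FF" using wa(1,3) ac by simp
    ultimately show "p \<in> ?P" by blast
  qed
  then have "generate FF (V_psi S (\<lambda>w. \<psi> (g \<otimes>\<^bsub>FF\<^esub> w))) \<subseteq> ?P" by (rule F.generate_subgroup_incl[OF _ Ps])
  then show ?thesis using k by blast
qed

end



lemma tg_lmul_cont:
  assumes T: "topgroup G T" and g: "g \<in> carrier G"
  shows "continuous_map T T (\<lambda>x. g \<otimes>\<^bsub>G\<^esub> x)"
proof -
  have ts: "topspace T = carrier G" using T unfolding topgroup_def by blast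
  have m: "continuous_map (prod_topology T T) T (\<lambda>p. fst p \<otimes>\<^bsub>G\<^esub> snd p)" using T unfolding topgroup_def by blast
  have "continuous_map T (prod_topology T T) (\<lambda>x. (g, x))"
    by (rule continuous_map_pairedI) (simp_all add: ts g continuous_map_id[unfolded id_def])
  from continuous_map_compose[OF this m] show ?thesis by (simp add: o_def)
qed

lemma tg_rmul_cont:
  assumes T: "topgroup G T" and g: "g \<in> carrier G"
  shows "continuous_map T T (\<lambda>x. x \<otimes>\<^bsub>G\<^esub> g)"
proof -
  have ts: "topspace T = carrier G" using T unfolding topgroup_def by blast
  have m: "continuous_map (prod_topology T T) T (\<lambda>p. fst p \<otimes>\<^bsub>G\<^esub> snd p)" using T unfolding topgroup_def by blast
  have "continuous_map T (prod_topology T T) (\<lambda>x. (x, g))"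
    by (rule continuous_map_pairedI) (simp_all add: ts g continuous_map_id[unfolded id_def])
  from continuous_map_compose[OF this m] show ?thesis by (simp add: o_def)
qed

lemma tg_conj_open:
  assumes T: "topgroup G T" and g: "g \<in> carrier G" and U: "openin T U"
  shows "openin T {x \<in> carrier G. g \<otimes>\<^bsub>G\<^esub> x \<otimes>\<^bsub>G\<^esub> inv\<^bsub>G\<^esub> g \<in> U}"
proof -
  have grp: "group G" using T unfolding topgroup_def by blast
  have ts: "topspace T = carrier G" using T unfolding topgroup_def by blast
  have ig: "inv\<^bsub>G\<^esub> g \<in> carrier G" using grp g by simp
  have "continuous_map T T ((\<lambda>x. x \<otimes>\<^bsub>G\<^esub> inv\<^bsub>G\<^esub> g) \<circ> (\<lambda>x. g \<otimes>\<^bsub>G\<^esub> x))"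
    by (rule continuous_map_compose[OF tg_lmul_cont[OF T g] tg_rmul_cont[OF T ig]])
  then have "openin T {x \<in> topspace T. ((\<lambda>x. x \<otimes>\<^bsub>G\<^esub> inv\<^bsub>G\<^esub> g) \<circ> (\<lambda>x. g \<otimes>\<^bsub>G\<^esub> x)) x \<in> U}"
    using U unfolding continuous_map_def by blast
  then show ?thesis by (simp add: ts)
qed

lemma tg_lmul_open:
  assumes T: "topgroup G T" and g: "g \<in> carrier G" and U: "openin T U"
  shows "openin T {x \<in> carrier G. g \<otimes>\<^bsub>G\<^esub> x \<in> U}"
proof -
  have ts: "topspace T = carrier G" using T unfolding topgroup_def by blast
  have "openin T {x \<in> topspace T. g \<otimes>\<^bsub>G\<^esub> x \<in> U}"
    using tg_lmul_cont[OF T g] U unfolding continuous_map_def by blast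
  then show ?thesis by (simp add: ts)
qed

locale ctx = fg S for S :: "'a set" +
  fixes U :: "('a \<times> 'a) set set" and B :: "('a \<times> 'a) set set"
  assumes unif: "uniformity_on_set S U"
    and base: "is_base U B"
    and equivs: "\<forall>e\<in>B. equiv S e"
begin

lemma U_ne: "U \<noteq> {}"
  using unif unfolding uniformity_on_set_def by (rule conjunct1)

lemma U_A: "\<forall>E\<in>U. E \<subseteq> S \<times> S \<and> Id_on S \<subseteq> E \<and> converse E \<in> U \<and> (\<exists>D\<in>U. relcomp D D \<subseteq> E)"
  using unif unfolding uniformity_on_set_def by (rule conjunct1[OF conjunct2])

lemma U_I: "\<forall>E\<in>U. \<forall>D\<in>U. E \<inter> D \<in> U"
  using unif unfolding uniformity_on_set_def by (rule conjunct1[OF conjunct2[OF conjunct2]])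

lemma U_sub: "E \<in> U \<Longrightarrow> E \<subseteq> S \<times> S"
  using U_A by (meson bspec conjunct1)

lemma B_U: "e \<in> B \<Longrightarrow> e \<in> U" using base unfolding is_base_def by (meson conjunct1 subsetD)

lemma B_sub: "e \<in> B \<Longrightarrow> e \<subseteq> S \<times> S" using B_U U_sub by metis

lemma B_base: "D \<in> U \<Longrightarrow> \<exists>e\<in>B. e \<subseteq> D" using base unfolding is_base_def by (meson conjunct2 bspec)

lemma B_ne: "B \<noteq> {}"
proof -
  obtain E where "E \<in> U" using U_ne by (metis ex_in_conv)
  then show ?thesis using B_base by (metis empty_iff)
qed

lemma B_inter: assumes "e1 \<in> B" "e2 \<in> B" shows "\<exists>e3\<in>B. e3 \<subseteq> e1 \<inter> e2"
proof -
  have "e1 \<inter> e2 \<in> U" using B_U[OF assms(1)] B_U[OF assms(2)] U_I by metis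
  then show ?thesis by (rule B_base)
qed

lemma B_sym: "e \<in> B \<Longrightarrow> (x, y) \<in> e \<Longrightarrow> (y, x) \<in> e"
  using equivs unfolding equiv_def sym_def by blast

lemma Pi_sub: "\<psi> \<in> carrier FF \<rightarrow> B \<Longrightarrow> w \<in> carrier FF \<Longrightarrow> \<psi> w \<subseteq> S \<times> S"
  using B_sub by blast

lemma j2_in: "(x, y) \<in> e \<Longrightarrow> inv\<^bsub>FF\<^esub> (ins x) \<otimes>\<^bsub>FF\<^esub> ins y \<in> j2 S e"
  unfolding j2_def by blast

lemma j2s_in: "(x, y) \<in> e \<Longrightarrow> ins x \<otimes>\<^bsub>FF\<^esub> inv\<^bsub>FF\<^esub> (ins y) \<in> j2s S e"
  unfolding j2s_def by blast

lemma V_base: assumes "a \<in> j2 S (\<psi> \<one>\<^bsub>FF\<^esub>) \<union> j2s S (\<psi> \<one>\<^bsub>FF\<^esub>)" "a \<in> carrier FF"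
  shows "a \<in> V_psi S \<psi>"
  using V_mem[where \<psi>=\<psi>, OF F.one_closed assms(1)] assms(2) by simp

lemma gen_sub: "\<psi> \<in> carrier FF \<rightarrow> B \<Longrightarrow> subgroup (generate FF (V_psi S \<psi>)) FF"
  by (rule F.generate_is_subgroup[OF V_sub[OF Pi_sub]])

lemma unif_step:
  assumes NA: "nonarch_group FF T" and uc: "unif_continuous S U (two_sided_unif FF T) ins"
    and K: "subgroup K FF" "openin T K"
  shows "\<exists>e\<in>B. \<forall>x y. (x, y) \<in> e \<longrightarrow> inv\<^bsub>FF\<^esub> (ins x) \<otimes>\<^bsub>FF\<^esub> ins y \<in> K \<and> ins x \<otimes>\<^bsub>FF\<^esub> inv\<^bsub>FF\<^esub> (ins y) \<in> K"
proof -
  have TG: "topgroup FF T" using NA unfolding nonarch_group_def by blast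
  have ts: "topspace T = carrier FF" using TG unfolding topgroup_def by blast
  have Kc: "K \<subseteq> carrier FF" by (rule subgroup.subset[OF K(1)])
  have one: "\<one>\<^bsub>FF\<^esub> \<in> K" by (rule subgroup.one_closed[OF K(1)])
  have nb: "nbhd1 FF T K" unfolding nbhd1_def ts using K(2) one Kc by blast
  let ?E = "{(g,h). g \<in> carrier FF \<and> h \<in> carrier FF \<and> inv\<^bsub>FF\<^esub> g \<otimes>\<^bsub>FF\<^esub> h \<in> K
              \<and> h \<otimes>\<^bsub>FF\<^esub> inv\<^bsub>FF\<^esub> g \<in> K}"
  have "?E \<in> two_sided_unif FF T" unfolding two_sided_unif_def using nb by blast
  then obtain D where D: "D \<in> U" "\<forall>(x,y)\<in>D. (ins x, ins y) \<in> ?E"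
    using uc unfolding unif_continuous_def by blast
  obtain e where e: "e \<in> B" "e \<subseteq> D" using B_base[OF D(1)] by blast
  have "inv\<^bsub>FF\<^esub> (ins x) \<otimes>\<^bsub>FF\<^esub> ins y \<in> K \<and> ins x \<otimes>\<^bsub>FF\<^esub> inv\<^bsub>FF\<^esub> (ins y) \<in> K"
    if xy: "(x, y) \<in> e" for x y
  proof -
    have "(x, y) \<in> D" "(y, x) \<in> D" using xy e B_sym by blast+
    then have "(ins x, ins y) \<in> ?E" "(ins y, ins x) \<in> ?E" using D(2) by blast+
    then show ?thesis by blast
  qed
  then show ?thesis using e(1) by blast
qed

lemma part1_contains:
  assumes NA: "nonarch_group FF T" and uc: "unif_continuous S U (two_sided_unif FF T) ins"
    and N: "nbhd1 FF T N"
  shows "\<exists>\<psi>\<in>carrier FF \<rightarrow> B. generate FF (V_psi S \<psi>) \<subseteq> N"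
proof -
  have TG: "topgroup FF T" using NA unfolding nonarch_group_def by blast
  obtain H where H: "subgroup H FF" "openin T H" "H \<subseteq> N" using NA N unfolding nonarch_group_def by blast
  have "\<exists>e\<in>B. \<forall>x y. (x, y) \<in> e \<longrightarrow> w \<otimes>\<^bsub>FF\<^esub> (inv\<^bsub>FF\<^esub> (ins x) \<otimes>\<^bsub>FF\<^esub> ins y) \<otimes>\<^bsub>FF\<^esub> inv\<^bsub>FF\<^esub> w \<in> H
          \<and> w \<otimes>\<^bsub>FF\<^esub> (ins x \<otimes>\<^bsub>FF\<^esub> inv\<^bsub>FF\<^esub> (ins y)) \<otimes>\<^bsub>FF\<^esub> inv\<^bsub>FF\<^esub> w \<in> H"
    if w: "w \<in> carrier FF" for w
  proof -
    let ?K = "{x \<in> carrier FF. w \<otimes>\<^bsub>FF\<^esub> x \<otimes>\<^bsub>FF\<^esub> inv\<^bsub>FF\<^esub> w \<in> H}"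
    have "subgroup ?K FF" by (rule F.conj_preimage_subgroup[OF H(1) w])
    moreover have "openin T ?K" by (rule tg_conj_open[OF TG w H(2)])
    ultimately have "\<exists>e\<in>B. \<forall>x y. (x, y) \<in> e \<longrightarrow> inv\<^bsub>FF\<^esub> (ins x) \<otimes>\<^bsub>FF\<^esub> ins y \<in> ?K \<and> ins x \<otimes>\<^bsub>FF\<^esub> inv\<^bsub>FF\<^esub> (ins y) \<in> ?K"
      by (intro unif_step[OF NA uc])
    then obtain e where e: "e \<in> B" "\<forall>x y. (x, y) \<in> e \<longrightarrow> inv\<^bsub>FF\<^esub> (ins x) \<otimes>\<^bsub>FF\<^esub> ins y \<in> ?K \<and> ins x \<otimes>\<^bsub>FF\<^esub> inv\<^bsub>FF\<^esub> (ins y) \<in> ?K"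
      by (rule bexE)
    have "\<forall>x y. (x, y) \<in> e \<longrightarrow> w \<otimes>\<^bsub>FF\<^esub> (inv\<^bsub>FF\<^esub> (ins x) \<otimes>\<^bsub>FF\<^esub> ins y) \<otimes>\<^bsub>FF\<^esub> inv\<^bsub>FF\<^esub> w \<in> H
          \<and> w \<otimes>\<^bsub>FF\<^esub> (ins x \<otimes>\<^bsub>FF\<^esub> inv\<^bsub>FF\<^esub> (ins y)) \<otimes>\<^bsub>FF\<^esub> inv\<^bsub>FF\<^esub> w \<in> H"
      using e(2) by simp
    then show ?thesis using e(1) by blast
  qed
  then have "\<forall>w\<in>carrier FF. \<exists>e. e \<in> B \<and> (\<forall>x y. (x, y) \<in> e \<longrightarrow>
        w \<otimes>\<^bsub>FF\<^esub> (inv\<^bsub>FF\<^esub> (ins x) \<otimes>\<^bsub>FF\<^esub> ins y) \<otimes>\<^bsub>FF\<^esub> inv\<^bsub>FF\<^esub> w \<in> H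
        \<and> w \<otimes>\<^bsub>FF\<^esub> (ins x \<otimes>\<^bsub>FF\<^esub> inv\<^bsub>FF\<^esub> (ins y)) \<otimes>\<^bsub>FF\<^esub> inv\<^bsub>FF\<^esub> w \<in> H)"
    by blast
  from bchoice[OF this] obtain \<psi> where \<psi>: "\<forall>w\<in>carrier FF. \<psi> w \<in> B \<and> (\<forall>x y. (x, y) \<in> \<psi> w \<longrightarrow>
        w \<otimes>\<^bsub>FF\<^esub> (inv\<^bsub>FF\<^esub> (ins x) \<otimes>\<^bsub>FF\<^esub> ins y) \<otimes>\<^bsub>FF\<^esub> inv\<^bsub>FF\<^esub> w \<in> H
        \<and> w \<otimes>\<^bsub>FF\<^esub> (ins x \<otimes>\<^bsub>FF\<^esub> inv\<^bsub>FF\<^esub> (ins y)) \<otimes>\<^bsub>FF\<^esub> inv\<^bsub>FF\<^esub> w \<in> H)"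
    by blast
  have psiB: "\<psi> \<in> carrier FF \<rightarrow> B" using \<psi> by blast
  have "V_psi S \<psi> \<subseteq> H"
  proof
    fix p assume "p \<in> V_psi S \<psi>"
    then obtain w a where wa: "w \<in> carrier FF" "a \<in> j2 S (\<psi> w) \<union> j2s S (\<psi> w)"
      "p = w \<otimes>\<^bsub>FF\<^esub> a \<otimes>\<^bsub>FF\<^esub> inv\<^bsub>FF\<^esub> w" using V_elim by blast
    from wa(2) obtain x y where "(x, y) \<in> \<psi> w"
      "a = inv\<^bsub>FF\<^esub> (ins x) \<otimes>\<^bsub>FF\<^esub> ins y \<or> a = ins x \<otimes>\<^bsub>FF\<^esub> inv\<^bsub>FF\<^esub> (ins y)"
      unfolding j2_def j2s_def by blast
    then show "p \<in> H" using \<psi> wa(1) wa(3) by metis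
  qed
  then have "generate FF (V_psi S \<psi>) \<subseteq> H" by (rule F.generate_subgroup_incl[OF _ H(1)])
  then show ?thesis using psiB H(3) by blast
qed

end



context ctx
begin

lemma quot_open:
  assumes Nn: "N \<lhd> FF"
    and sub0: "\<And>K. K \<in> \<K>0 \<Longrightarrow> subgroup K FF" and ne0: "\<K>0 \<noteq> {}"
    and dir0: "\<And>K1 K2. K1 \<in> \<K>0 \<Longrightarrow> K2 \<in> \<K>0 \<Longrightarrow> \<exists>K3\<in>\<K>0. K3 \<subseteq> K1 \<inter> K2"
    and conj0: "\<And>K g. K \<in> \<K>0 \<Longrightarrow> g \<in> carrier FF \<Longrightarrow> \<exists>K'\<in>\<K>0. \<forall>k\<in>K'. g \<otimes>\<^bsub>FF\<^esub> k \<otimes>\<^bsub>FF\<^esub> inv\<^bsub>FF\<^esub> g \<in> K"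
    and NK: "\<And>K. K \<in> \<K>0 \<Longrightarrow> N \<subseteq> K"
    and unifK: "\<And>K. K \<in> \<K>0 \<Longrightarrow> \<exists>D\<in>U. \<forall>x y. (x, y) \<in> D \<longrightarrow>
        inv\<^bsub>FF\<^esub> (ins x) \<otimes>\<^bsub>FF\<^esub> ins y \<in> K \<and> ins y \<otimes>\<^bsub>FF\<^esub> inv\<^bsub>FF\<^esub> (ins x) \<in> K"
    and univ: "\<And>f. f \<in> S \<rightarrow> carrier (FF Mod N) \<Longrightarrow>
        unif_continuous S U (two_sided_unif (FF Mod N) (ktop (FF Mod N) (qimg FF N \<K>0))) f \<Longrightarrow>
        \<exists>h. h \<in> hom FF (FF Mod N) \<and> continuous_map T (ktop (FF Mod N) (qimg FF N \<K>0)) h \<and> (\<forall>x\<in>S. h (ins x) = f x)"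
    and TS: "topspace T = carrier FF"
    and K: "K \<in> \<K>0"
  shows "nbhd1 FF T K"
proof -
  interpret nN: normal N FF by (rule Nn)
  interpret gh: group_hom FF "FF Mod N" "\<lambda>a. N #>\<^bsub>FF\<^esub> a" by (rule nN.pi_hom)
  interpret kG: kgroup "FF Mod N" "qimg FF N \<K>0"
    by (rule nN.quot_kgroup[OF sub0 ne0 dir0 conj0])
  define f where "f = (\<lambda>x. N #>\<^bsub>FF\<^esub> ins x)"
  have fS: "f \<in> S \<rightarrow> carrier (FF Mod N)" unfolding f_def using ins_carrier by simp
  have uc: "unif_continuous S U (two_sided_unif (FF Mod N) (ktop (FF Mod N) (qimg FF N \<K>0))) f"
    unfolding unif_continuous_def
  proof
    fix E assume "E \<in> two_sided_unif (FF Mod N) (ktop (FF Mod N) (qimg FF N \<K>0))"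
    then obtain V where V: "nbhd1 (FF Mod N) (ktop (FF Mod N) (qimg FF N \<K>0)) V"
      "{(g,h). g \<in> carrier (FF Mod N) \<and> h \<in> carrier (FF Mod N) \<and> inv\<^bsub>FF Mod N\<^esub> g \<otimes>\<^bsub>FF Mod N\<^esub> h \<in> V
              \<and> h \<otimes>\<^bsub>FF Mod N\<^esub> inv\<^bsub>FF Mod N\<^esub> g \<in> V} \<subseteq> E"
      unfolding two_sided_unif_def by blast
    obtain K' where K': "K' \<in> qimg FF N \<K>0" "K' \<subseteq> V" using V(1) unfolding kG.nbhd1_iff by blast
    obtain L where L: "L \<in> \<K>0" "K' = (\<lambda>a. N #>\<^bsub>FF\<^esub> a) ` L" using K'(1) unfolding qimg_def by blast
    obtain D where D: "D \<in> U" "\<forall>x y. (x, y) \<in> D \<longrightarrow>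
        inv\<^bsub>FF\<^esub> (ins x) \<otimes>\<^bsub>FF\<^esub> ins y \<in> L \<and> ins y \<otimes>\<^bsub>FF\<^esub> inv\<^bsub>FF\<^esub> (ins x) \<in> L"
      using unifK[OF L(1)] by blast
    have "(f x, f y) \<in> E" if xy: "(x, y) \<in> D" for x y
    proof -
      have xS: "x \<in> S" and yS: "y \<in> S" using U_sub[OF D(1)] xy by auto
      have ix: "ins x \<in> carrier FF" and iy: "ins y \<in> carrier FF" using ins_carrier xS yS by auto
      have e1: "inv\<^bsub>FF Mod N\<^esub> f x \<otimes>\<^bsub>FF Mod N\<^esub> f y = N #>\<^bsub>FF\<^esub> (inv\<^bsub>FF\<^esub> (ins x) \<otimes>\<^bsub>FF\<^esub> ins y)"
        unfolding f_def using ix iy by simp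
      have e2: "f y \<otimes>\<^bsub>FF Mod N\<^esub> inv\<^bsub>FF Mod N\<^esub> f x = N #>\<^bsub>FF\<^esub> (ins y \<otimes>\<^bsub>FF\<^esub> inv\<^bsub>FF\<^esub> (ins x))"
        unfolding f_def using ix iy by simp
      have "inv\<^bsub>FF Mod N\<^esub> f x \<otimes>\<^bsub>FF Mod N\<^esub> f y \<in> V" "f y \<otimes>\<^bsub>FF Mod N\<^esub> inv\<^bsub>FF Mod N\<^esub> f x \<in> V"
        using D(2) xy e1 e2 L(2) K'(2) by blast+
      moreover have "f x \<in> carrier (FF Mod N)" "f y \<in> carrier (FF Mod N)" using fS xS yS by auto
      ultimately show ?thesis using V(2) by blast
    qed
    then show "\<exists>D\<in>U. \<forall>(x, y)\<in>D. (f x, f y) \<in> E" using D(1) by blast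
  qed
  obtain h where h: "h \<in> hom FF (FF Mod N)" "continuous_map T (ktop (FF Mod N) (qimg FF N \<K>0)) h"
    "\<forall>x\<in>S. h (ins x) = f x" using univ[OF fS uc] by blast
  have hpi: "h w = N #>\<^bsub>FF\<^esub> w" if w: "w \<in> carrier FF" for w
    by (rule hom_agree[OF nN.factorgroup_is_group h(1) nN.r_coset_hom_Mod _ w]) (use h(3) f_def in simp)
  let ?K = "(\<lambda>a. N #>\<^bsub>FF\<^esub> a) ` K"
  have Kq: "?K \<in> qimg FF N \<K>0" using K unfolding qimg_def by blast
  have "openin (ktop (FF Mod N) (qimg FF N \<K>0)) ?K" by (rule kG.K_open[OF Kq])
  then have W: "openin T {w \<in> topspace T. h w \<in> ?K}" using h(2) unfolding continuous_map_def by blast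
  have Kc: "K \<subseteq> carrier FF" by (rule subgroup.subset[OF sub0[OF K]])
  have one: "\<one>\<^bsub>FF\<^esub> \<in> K" by (rule subgroup.one_closed[OF sub0[OF K]])
  have "h \<one>\<^bsub>FF\<^esub> = N #>\<^bsub>FF\<^esub> \<one>\<^bsub>FF\<^esub>" by (rule hpi[OF F.one_closed])
  then have "h \<one>\<^bsub>FF\<^esub> \<in> ?K" by (rule image_eqI[OF _ one])
  moreover have "\<one>\<^bsub>FF\<^esub> \<in> topspace T" using TS by simp
  ultimately have W1: "\<one>\<^bsub>FF\<^esub> \<in> {w \<in> topspace T. h w \<in> ?K}" by (intro CollectI conjI)
  moreover have W2: "{w \<in> topspace T. h w \<in> ?K} \<subseteq> K"
  proof
    fix w assume "w \<in> {w \<in> topspace T. h w \<in> ?K}"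
    then have w: "w \<in> carrier FF" "N #>\<^bsub>FF\<^esub> w \<in> ?K" using TS hpi by auto
    then obtain k where k: "k \<in> K" "N #>\<^bsub>FF\<^esub> w = N #>\<^bsub>FF\<^esub> k" by blast
    show "w \<in> K" by (rule nN.coset_preimage[OF sub0[OF K] NK[OF K] w(1) k(1) k(2)])
  qed
  have "K \<subseteq> topspace T" using Kc TS by simp
  then show ?thesis unfolding nbhd1_def
    by (intro conjI exI[of _ "{w \<in> topspace T. h w \<in> ?K}"] W W1 W2)
qed


lemma unifK_gen:
  assumes phi: "\<phi> \<in> carrier FF \<rightarrow> B"
  shows "\<exists>D\<in>U. \<forall>x y. (x, y) \<in> D \<longrightarrow>
        inv\<^bsub>FF\<^esub> (ins x) \<otimes>\<^bsub>FF\<^esub> ins y \<in> generate FF (V_psi S \<phi>) \<and>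
        ins y \<otimes>\<^bsub>FF\<^esub> inv\<^bsub>FF\<^esub> (ins x) \<in> generate FF (V_psi S \<phi>)"
proof -
  have e: "\<phi> \<one>\<^bsub>FF\<^esub> \<in> B" using phi F.one_closed by blast
  have "inv\<^bsub>FF\<^esub> (ins x) \<otimes>\<^bsub>FF\<^esub> ins y \<in> generate FF (V_psi S \<phi>) \<and>
        ins y \<otimes>\<^bsub>FF\<^esub> inv\<^bsub>FF\<^esub> (ins x) \<in> generate FF (V_psi S \<phi>)" if xy: "(x, y) \<in> \<phi> \<one>\<^bsub>FF\<^esub>" for x y
  proof -
    have yx: "(y, x) \<in> \<phi> \<one>\<^bsub>FF\<^esub>" by (rule B_sym[OF e xy])
    have xS: "x \<in> S" and yS: "y \<in> S" using B_sub[OF e] xy by auto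
    have c1: "inv\<^bsub>FF\<^esub> (ins x) \<otimes>\<^bsub>FF\<^esub> ins y \<in> carrier FF" using ins_carrier[OF xS] ins_carrier[OF yS] by simp
    have c2: "ins y \<otimes>\<^bsub>FF\<^esub> inv\<^bsub>FF\<^esub> (ins x) \<in> carrier FF" using ins_carrier[OF xS] ins_carrier[OF yS] by simp
    have "inv\<^bsub>FF\<^esub> (ins x) \<otimes>\<^bsub>FF\<^esub> ins y \<in> V_psi S \<phi>"
      by (rule V_base[OF _ c1]) (use j2_in[OF xy] in blast)
    moreover have "ins y \<otimes>\<^bsub>FF\<^esub> inv\<^bsub>FF\<^esub> (ins x) \<in> V_psi S \<phi>"
      by (rule V_base[OF _ c2]) (use j2s_in[OF yx] in blast)
    ultimately show ?thesis by (blast intro: generate.incl)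
  qed
  then show ?thesis using B_U[OF e] by blast
qed

lemma FNA_parts:
  assumes "is_FNA S U T"
  shows "nonarch_group FF T" "topspace T = carrier FF" "unif_continuous S U (two_sided_unif FF T) ins"
    "\<And>(G :: 'a word set monoid) TG f. nonarch_group G TG \<Longrightarrow> Hausdorff_space TG \<Longrightarrow> f \<in> S \<rightarrow> carrier G \<Longrightarrow>
        unif_continuous S U (two_sided_unif G TG) f \<Longrightarrow>
        \<exists>h. h \<in> hom FF G \<and> continuous_map T TG h \<and> (\<forall>x\<in>S. h (ins x) = f x)"
proof -
  note A = assms[unfolded is_FNA_def]
  show na: "nonarch_group FF T" using A by (rule conjunct1)
  show "topspace T = carrier FF" using na unfolding nonarch_group_def topgroup_def by blast
  show "unif_continuous S U (two_sided_unif FF T) ins" using A by (rule conjunct1[OF conjunct2[OF conjunct2]])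
  have U: "\<forall>(G :: 'a word set monoid) TG f.
        nonarch_group G TG \<and> Hausdorff_space TG \<and> f \<in> S \<rightarrow> carrier G \<and>
        unif_continuous S U (two_sided_unif G TG) f \<longrightarrow>
        (\<exists>h. h \<in> hom FF G \<and> continuous_map T TG h \<and> (\<forall>x\<in>S. h (ins x) = f x) \<and>
           (\<forall>h'. h' \<in> hom FF G \<and> continuous_map T TG h' \<and>
                 (\<forall>x\<in>S. h' (ins x) = f x) \<longrightarrow> (\<forall>w\<in>carrier FF. h' w = h w)))"
    using A by (rule conjunct2[OF conjunct2[OF conjunct2]])
  fix G :: "'a word set monoid" and TG f
  assume "nonarch_group G TG" "Hausdorff_space TG" "f \<in> S \<rightarrow> carrier G" "unif_continuous S U (two_sided_unif G TG) f"
  then have "\<exists>h. h \<in> hom FF G \<and> continuous_map T TG h \<and> (\<forall>x\<in>S. h (ins x) = f x) \<and>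
           (\<forall>h'. h' \<in> hom FF G \<and> continuous_map T TG h' \<and>
                 (\<forall>x\<in>S. h' (ins x) = f x) \<longrightarrow> (\<forall>w\<in>carrier FF. h' w = h w))"
    using U by blast
  then show "\<exists>h. h \<in> hom FF G \<and> continuous_map T TG h \<and> (\<forall>x\<in>S. h (ins x) = f x)" by blast
qed

lemma part1_open:
  assumes FNA: "is_FNA S U T" and psi: "\<psi> \<in> carrier FF \<rightarrow> B"
  shows "nbhd1 FF T (generate FF (V_psi S \<psi>))"
proof -
  note P = FNA_parts[OF FNA]
  define \<Phi> where "\<Phi> = carrier FF \<rightarrow> B"
  define \<K>0 where "\<K>0 = (\<lambda>\<phi>. generate FF (V_psi S \<phi>)) ` \<Phi>"
  define N where "N = \<Inter>\<K>0"
  have sub0: "subgroup K FF" if K: "K \<in> \<K>0" for K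
  proof -
    obtain \<phi> where "\<phi> \<in> \<Phi>" "K = generate FF (V_psi S \<phi>)" using K unfolding \<K>0_def by blast
    then show ?thesis using gen_sub unfolding \<Phi>_def by simp
  qed
  have psiK: "generate FF (V_psi S \<psi>) \<in> \<K>0" using psi unfolding \<K>0_def \<Phi>_def by blast
  then have ne0: "\<K>0 \<noteq> {}" by blast
  have dir0: "\<exists>K3\<in>\<K>0. K3 \<subseteq> K1 \<inter> K2" if K: "K1 \<in> \<K>0" "K2 \<in> \<K>0" for K1 K2
  proof -
    obtain \<phi>1 \<phi>2 where ph: "\<phi>1 \<in> \<Phi>" "K1 = generate FF (V_psi S \<phi>1)" "\<phi>2 \<in> \<Phi>" "K2 = generate FF (V_psi S \<phi>2)"
      using K unfolding \<K>0_def by blast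
    define \<phi>3 where "\<phi>3 = (\<lambda>w. SOME e. e \<in> B \<and> e \<subseteq> \<phi>1 w \<inter> \<phi>2 w)"
    have p3: "\<phi>3 w \<in> B \<and> \<phi>3 w \<subseteq> \<phi>1 w \<inter> \<phi>2 w" if w: "w \<in> carrier FF" for w
    proof -
      have "\<exists>e. e \<in> B \<and> e \<subseteq> \<phi>1 w \<inter> \<phi>2 w" using B_inter[of "\<phi>1 w" "\<phi>2 w"] ph w unfolding \<Phi>_def by blast
      then show ?thesis unfolding \<phi>3_def by (rule someI_ex)
    qed
    have "\<phi>3 \<in> \<Phi>" using p3 unfolding \<Phi>_def by blast
    then have "generate FF (V_psi S \<phi>3) \<in> \<K>0" unfolding \<K>0_def by blast
    moreover have "V_psi S \<phi>3 \<subseteq> V_psi S \<phi>1" by (rule V_mono) (use p3 in blast)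
    moreover have "V_psi S \<phi>3 \<subseteq> V_psi S \<phi>2" by (rule V_mono) (use p3 in blast)
    ultimately show ?thesis using F.mono_generate ph(2,4) by (metis le_inf_iff)
  qed
  have conj0: "\<exists>K'\<in>\<K>0. \<forall>k\<in>K'. g \<otimes>\<^bsub>FF\<^esub> k \<otimes>\<^bsub>FF\<^esub> inv\<^bsub>FF\<^esub> g \<in> K"
    if K: "K \<in> \<K>0" and g: "g \<in> carrier FF" for K g
  proof -
    obtain \<phi> where ph: "\<phi> \<in> \<Phi>" "K = generate FF (V_psi S \<phi>)" using K unfolding \<K>0_def by blast
    have "(\<lambda>w. \<phi> (g \<otimes>\<^bsub>FF\<^esub> w)) \<in> \<Phi>" unfolding \<Phi>_def
    proof (rule Pi_I)
      fix w assume "w \<in> carrier FF"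
      then have "g \<otimes>\<^bsub>FF\<^esub> w \<in> carrier FF" using g by simp
      then show "\<phi> (g \<otimes>\<^bsub>FF\<^esub> w) \<in> B" using ph(1) unfolding \<Phi>_def by (rule funcset_mem[rotated])
    qed
    then have "generate FF (V_psi S (\<lambda>w. \<phi> (g \<otimes>\<^bsub>FF\<^esub> w))) \<in> \<K>0" unfolding \<K>0_def by blast
    moreover have "\<forall>k\<in>generate FF (V_psi S (\<lambda>w. \<phi> (g \<otimes>\<^bsub>FF\<^esub> w))). g \<otimes>\<^bsub>FF\<^esub> k \<otimes>\<^bsub>FF\<^esub> inv\<^bsub>FF\<^esub> g \<in> K"
    proof
      fix k assume "k \<in> generate FF (V_psi S (\<lambda>w. \<phi> (g \<otimes>\<^bsub>FF\<^esub> w)))"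
      from conj_V[OF g Pi_sub[OF ph(1)[unfolded \<Phi>_def]] this]
      show "g \<otimes>\<^bsub>FF\<^esub> k \<otimes>\<^bsub>FF\<^esub> inv\<^bsub>FF\<^esub> g \<in> K" using ph(2) by simp
    qed
    ultimately show ?thesis by blast
  qed
  have NK: "N \<subseteq> K" if "K \<in> \<K>0" for K using that unfolding N_def by blast
  have Ns: "subgroup N FF" unfolding N_def by (rule F.subgroups_Inter[OF sub0 ne0])
  have Nn: "N \<lhd> FF"
  proof (rule F.normal_invI[OF Ns])
    fix x h assume x: "x \<in> carrier FF" and h: "h \<in> N"
    have "x \<otimes>\<^bsub>FF\<^esub> h \<otimes>\<^bsub>FF\<^esub> inv\<^bsub>FF\<^esub> x \<in> K" if K: "K \<in> \<K>0" for K
    proof -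
      obtain K' where K': "K' \<in> \<K>0" "\<forall>k\<in>K'. x \<otimes>\<^bsub>FF\<^esub> k \<otimes>\<^bsub>FF\<^esub> inv\<^bsub>FF\<^esub> x \<in> K" using conj0[OF K x] by blast
      have "h \<in> K'" using h K'(1) unfolding N_def by blast
      then show ?thesis using K'(2) by blast
    qed
    then show "x \<otimes>\<^bsub>FF\<^esub> h \<otimes>\<^bsub>FF\<^esub> inv\<^bsub>FF\<^esub> x \<in> N" unfolding N_def by blast
  qed
  interpret nN: normal N FF by (rule Nn)
  interpret kG: kgroup "FF Mod N" "qimg FF N \<K>0"
    by (rule nN.quot_kgroup[OF sub0 ne0 dir0 conj0])
  have haus: "Hausdorff_space (ktop (FF Mod N) (qimg FF N \<K>0))"
  proof (rule kG.hausdorff)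
    fix C assume C: "C \<in> carrier (FF Mod N)" "\<forall>K\<in>qimg FF N \<K>0. C \<in> K"
    have inter: "x \<in> N" if "x \<in> carrier FF" "\<forall>K\<in>\<K>0. x \<in> K" for x
      using that unfolding N_def by blast
    show "C = \<one>\<^bsub>FF Mod N\<^esub>" by (rule nN.quot_sep[OF sub0 NK inter C])
  qed
  have unifK: "\<exists>D\<in>U. \<forall>x y. (x, y) \<in> D \<longrightarrow>
        inv\<^bsub>FF\<^esub> (ins x) \<otimes>\<^bsub>FF\<^esub> ins y \<in> K \<and> ins y \<otimes>\<^bsub>FF\<^esub> inv\<^bsub>FF\<^esub> (ins x) \<in> K" if K: "K \<in> \<K>0" for K
  proof -
    obtain \<phi> where ph: "\<phi> \<in> \<Phi>" "K = generate FF (V_psi S \<phi>)" using K unfolding \<K>0_def by blast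
    show ?thesis using unifK_gen[of \<phi>] ph unfolding \<Phi>_def by simp
  qed
  show ?thesis
  proof (rule quot_open[OF Nn sub0 ne0 dir0 conj0 NK unifK _ P(2) psiK])
    fix f assume "f \<in> S \<rightarrow> carrier (FF Mod N)"
      "unif_continuous S U (two_sided_unif (FF Mod N) (ktop (FF Mod N) (qimg FF N \<K>0))) f"
    then show "\<exists>h. h \<in> hom FF (FF Mod N) \<and> continuous_map T (ktop (FF Mod N) (qimg FF N \<K>0)) h \<and> (\<forall>x\<in>S. h (ins x) = f x)"
      using P(4)[OF kG.nonarch haus] by blast
  qed
qed

end



context ctx
begin

lemma FNAb_parts:
  assumes "is_FNA_b S U T"
  shows "nonarch_group FF T" "balanced_group FF T" "topspace T = carrier FF"
    "unif_continuous S U (two_sided_unif FF T) ins"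
    "\<And>(G :: 'a word set monoid) TG f. nonarch_group G TG \<Longrightarrow> balanced_group G TG \<Longrightarrow> Hausdorff_space TG \<Longrightarrow>
        f \<in> S \<rightarrow> carrier G \<Longrightarrow> unif_continuous S U (two_sided_unif G TG) f \<Longrightarrow>
        \<exists>h. h \<in> hom FF G \<and> continuous_map T TG h \<and> (\<forall>x\<in>S. h (ins x) = f x)"
proof -
  note A = assms[unfolded is_FNA_b_def]
  show na: "nonarch_group FF T" using A by (rule conjunct1)
  show "balanced_group FF T" using A by (rule conjunct1[OF conjunct2])
  show "topspace T = carrier FF" using na unfolding nonarch_group_def topgroup_def by blast
  show "unif_continuous S U (two_sided_unif FF T) ins" using A by (rule conjunct1[OF conjunct2[OF conjunct2[OF conjunct2]]])
  have U: "\<forall>(G :: 'a word set monoid) TG f.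
        nonarch_group G TG \<and> balanced_group G TG \<and> Hausdorff_space TG \<and> f \<in> S \<rightarrow> carrier G \<and>
        unif_continuous S U (two_sided_unif G TG) f \<longrightarrow>
        (\<exists>h. h \<in> hom FF G \<and> continuous_map T TG h \<and> (\<forall>x\<in>S. h (ins x) = f x) \<and>
           (\<forall>h'. h' \<in> hom FF G \<and> continuous_map T TG h' \<and>
                 (\<forall>x\<in>S. h' (ins x) = f x) \<longrightarrow> (\<forall>w\<in>carrier FF. h' w = h w)))"
    using A by (rule conjunct2[OF conjunct2[OF conjunct2[OF conjunct2]]])
  fix G :: "'a word set monoid" and TG f
  assume "nonarch_group G TG" "balanced_group G TG" "Hausdorff_space TG" "f \<in> S \<rightarrow> carrier G"
    "unif_continuous S U (two_sided_unif G TG) f"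
  then have "\<exists>h. h \<in> hom FF G \<and> continuous_map T TG h \<and> (\<forall>x\<in>S. h (ins x) = f x) \<and>
           (\<forall>h'. h' \<in> hom FF G \<and> continuous_map T TG h' \<and>
                 (\<forall>x\<in>S. h' (ins x) = f x) \<longrightarrow> (\<forall>w\<in>carrier FF. h' w = h w))"
    using U by blast
  then show "\<exists>h. h \<in> hom FF G \<and> continuous_map T TG h \<and> (\<forall>x\<in>S. h (ins x) = f x)" by blast
qed

lemma const_Pi: "e \<in> B \<Longrightarrow> (\<lambda>_. e) \<in> carrier FF \<rightarrow> B" by simp

lemma part2_normal:
  assumes e: "e \<in> B"
  shows "generate FF (eps_tilde S e) \<lhd> FF"
proof -
  have sub: "subgroup (generate FF (eps_tilde S e)) FF"
    unfolding eps_tilde_V by (rule gen_sub[OF const_Pi[OF e]])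
  show ?thesis
  proof (rule F.normal_invI[OF sub])
    fix x h assume x: "x \<in> carrier FF" and h: "h \<in> generate FF (eps_tilde S e)"
    have ps: "\<And>w. w \<in> carrier FF \<Longrightarrow> (\<lambda>_. e) w \<subseteq> S \<times> S" using B_sub[OF e] by simp
    have "h \<in> generate FF (V_psi S (\<lambda>w. (\<lambda>_. e) (x \<otimes>\<^bsub>FF\<^esub> w)))" using h unfolding eps_tilde_V by simp
    from conj_V[OF x ps this] show "x \<otimes>\<^bsub>FF\<^esub> h \<otimes>\<^bsub>FF\<^esub> inv\<^bsub>FF\<^esub> x \<in> generate FF (eps_tilde S e)"
      unfolding eps_tilde_V .
  qed
qed

lemma part2_open:
  assumes FNA: "is_FNA_b S U T" and e: "e \<in> B"
  shows "nbhd1 FF T (generate FF (eps_tilde S e))"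
proof -
  note P = FNAb_parts[OF FNA]
  define M where "M = generate FF (eps_tilde S e)"
  have Mn: "M \<lhd> FF" unfolding M_def by (rule part2_normal[OF e])
  interpret nM: normal M FF by (rule Mn)
  have Ms: "subgroup M FF" by (rule nM.subgroup_axioms)
  have sub0: "subgroup K FF" if "K \<in> {M}" for K using that Ms by simp
  have ne0: "{M} \<noteq> {}" by simp
  have dir0: "\<exists>K3\<in>{M}. K3 \<subseteq> K1 \<inter> K2" if "K1 \<in> {M}" "K2 \<in> {M}" for K1 K2 using that by simp
  have conj0: "\<exists>K'\<in>{M}. \<forall>k\<in>K'. g \<otimes>\<^bsub>FF\<^esub> k \<otimes>\<^bsub>FF\<^esub> inv\<^bsub>FF\<^esub> g \<in> K"
    if K: "K \<in> {M}" and g: "g \<in> carrier FF" for K g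
    using K nM.inv_op_closed2[OF g] by blast
  have NK: "M \<subseteq> K" if "K \<in> {M}" for K using that by simp
  interpret kG: kgroup "FF Mod M" "qimg FF M {M}"
    by (rule nM.quot_kgroup[OF sub0 ne0 dir0 conj0])
  have haus: "Hausdorff_space (ktop (FF Mod M) (qimg FF M {M}))"
  proof (rule kG.hausdorff)
    fix C assume C: "C \<in> carrier (FF Mod M)" "\<forall>K\<in>qimg FF M {M}. C \<in> K"
    have inter: "x \<in> M" if "x \<in> carrier FF" "\<forall>K\<in>{M}. x \<in> K" for x using that by simp
    show "C = \<one>\<^bsub>FF Mod M\<^esub>" by (rule nM.quot_sep[OF sub0 NK inter C])
  qed
  have img: "(\<lambda>a. M #>\<^bsub>FF\<^esub> a) ` M = {\<one>\<^bsub>FF Mod M\<^esub>}"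
  proof -
    have "M #>\<^bsub>FF\<^esub> m = M" if "m \<in> M" for m
      using F.coset_join2[OF subgroup.mem_carrier[OF Ms that] Ms that] .
    moreover have "\<one>\<^bsub>FF\<^esub> \<in> M" by (rule subgroup.one_closed[OF Ms])
    ultimately have a: "\<And>m. m \<in> M \<Longrightarrow> M #>\<^bsub>FF\<^esub> m = M" and b: "\<one>\<^bsub>FF\<^esub> \<in> M" by blast+
    show ?thesis
    proof (intro equalityI subsetI)
        fix C
        assume "C \<in> (\<lambda>a. M #>\<^bsub>FF\<^esub> a) ` M"
        then obtain m where "m \<in> M" "C = M #>\<^bsub>FF\<^esub> m" by blast
        then show "C \<in> {\<one>\<^bsub>FF Mod M\<^esub>}" using a by simp
      next
        fix C
        assume "C \<in> {\<one>\<^bsub>FF Mod M\<^esub>}"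
        then have "C = M #>\<^bsub>FF\<^esub> \<one>\<^bsub>FF\<^esub>" using a[OF b] by simp
        then show "C \<in> (\<lambda>a. M #>\<^bsub>FF\<^esub> a) ` M" using b by blast
    qed
  qed
  have bal: "balanced_group (FF Mod M) (ktop (FF Mod M) (qimg FF M {M}))"
  proof (rule kG.balanced)
    fix K assume "K \<in> qimg FF M {M}"
    then have "K = {\<one>\<^bsub>FF Mod M\<^esub>}" using img unfolding qimg_def by simp
    then show "K \<lhd> FF Mod M" using group.one_is_normal[OF nM.factorgroup_is_group] by simp
  qed
  have unifK: "\<exists>D\<in>U. \<forall>x y. (x, y) \<in> D \<longrightarrow>
        inv\<^bsub>FF\<^esub> (ins x) \<otimes>\<^bsub>FF\<^esub> ins y \<in> K \<and> ins y \<otimes>\<^bsub>FF\<^esub> inv\<^bsub>FF\<^esub> (ins x) \<in> K" if K: "K \<in> {M}" for K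
    using unifK_gen[OF const_Pi[OF e]] K unfolding M_def eps_tilde_V by simp
  have MK: "M \<in> {M}" by simp
  show ?thesis unfolding M_def[symmetric]
  proof (rule quot_open[OF Mn sub0 ne0 dir0 conj0 NK unifK _ P(3) MK])
    fix f assume "f \<in> S \<rightarrow> carrier (FF Mod M)"
      "unif_continuous S U (two_sided_unif (FF Mod M) (ktop (FF Mod M) (qimg FF M {M}))) f"
    then show "\<exists>h. h \<in> hom FF (FF Mod M) \<and> continuous_map T (ktop (FF Mod M) (qimg FF M {M})) h \<and> (\<forall>x\<in>S. h (ins x) = f x)"
      using P(5)[OF kG.nonarch bal haus] by blast
  qed
qed

lemma part2_contains:
  assumes FNA: "is_FNA_b S U T" and N: "nbhd1 FF T N"
  shows "\<exists>e\<in>B. generate FF (eps_tilde S e) \<subseteq> N"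
proof -
  note P = FNAb_parts[OF FNA]
  have NA: "nonarch_group FF T" by (rule P(1))
  obtain H where H: "subgroup H FF" "openin T H" "H \<subseteq> N" using NA N unfolding nonarch_group_def by blast
  have Hc: "H \<subseteq> carrier FF" by (rule subgroup.subset[OF H(1)])
  have one: "\<one>\<^bsub>FF\<^esub> \<in> H" by (rule subgroup.one_closed[OF H(1)])
  have nbH: "nbhd1 FF T H" unfolding nbhd1_def P(3) using H(2) one Hc by blast
  let ?EL = "{(g,h). g \<in> carrier FF \<and> h \<in> carrier FF \<and> inv\<^bsub>FF\<^esub> g \<otimes>\<^bsub>FF\<^esub> h \<in> H}"
  have "?EL \<in> left_unif FF T" unfolding left_unif_def using nbH by blast
  then have "?EL \<in> right_unif FF T" using P(2) unfolding balanced_group_def by simp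
  then obtain V where V: "nbhd1 FF T V"
    "{(g,h). g \<in> carrier FF \<and> h \<in> carrier FF \<and> h \<otimes>\<^bsub>FF\<^esub> inv\<^bsub>FF\<^esub> g \<in> V} \<subseteq> ?EL"
    unfolding right_unif_def by blast
  have Vc: "V \<subseteq> carrier FF" using V(1) P(3) unfolding nbhd1_def by blast
  have VH: "w \<otimes>\<^bsub>FF\<^esub> v \<otimes>\<^bsub>FF\<^esub> inv\<^bsub>FF\<^esub> w \<in> H" if w: "w \<in> carrier FF" and v: "v \<in> V" for w v
  proof -
    have vc: "v \<in> carrier FF" using v Vc by blast
    let ?g = "inv\<^bsub>FF\<^esub> w" and ?h = "v \<otimes>\<^bsub>FF\<^esub> inv\<^bsub>FF\<^esub> w"
    have "?h \<otimes>\<^bsub>FF\<^esub> inv\<^bsub>FF\<^esub> ?g = v" using w vc by (simp add: F.m_assoc)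
    then have "(?g, ?h) \<in> {(g,h). g \<in> carrier FF \<and> h \<in> carrier FF \<and> h \<otimes>\<^bsub>FF\<^esub> inv\<^bsub>FF\<^esub> g \<in> V}"
      using v w vc by simp
    then have "(?g, ?h) \<in> ?EL" using V(2) by (rule subsetD[rotated])
    then have "inv\<^bsub>FF\<^esub> ?g \<otimes>\<^bsub>FF\<^esub> ?h \<in> H" by simp
    then show ?thesis using w vc by (simp add: F.m_assoc)
  qed
  obtain K where K: "subgroup K FF" "openin T K" "K \<subseteq> V" using NA V(1) unfolding nonarch_group_def by blast
  obtain e where e: "e \<in> B" "\<forall>x y. (x, y) \<in> e \<longrightarrow> inv\<^bsub>FF\<^esub> (ins x) \<otimes>\<^bsub>FF\<^esub> ins y \<in> K \<and> ins x \<otimes>\<^bsub>FF\<^esub> inv\<^bsub>FF\<^esub> (ins y) \<in> K"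
    using unif_step[OF NA P(4) K(1) K(2)] by blast
  have "eps_tilde S e \<subseteq> H"
  proof
    fix p assume "p \<in> eps_tilde S e"
    then obtain w a where wa: "w \<in> carrier FF" "a \<in> j2 S e \<union> j2s S e"
      "p = w \<otimes>\<^bsub>FF\<^esub> a \<otimes>\<^bsub>FF\<^esub> inv\<^bsub>FF\<^esub> w" using V_elim[of p "\<lambda>_. e"] unfolding eps_tilde_V by blast
    from wa(2) obtain x y where "(x, y) \<in> e"
      "a = inv\<^bsub>FF\<^esub> (ins x) \<otimes>\<^bsub>FF\<^esub> ins y \<or> a = ins x \<otimes>\<^bsub>FF\<^esub> inv\<^bsub>FF\<^esub> (ins y)"
      unfolding j2_def j2s_def by blast
    then have "a \<in> K" using e(2) by blast
    then have "a \<in> V" using K(3) by blast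
    then show "p \<in> H" using VH[OF wa(1)] wa(3) by simp
  qed
  then have "generate FF (eps_tilde S e) \<subseteq> H" by (rule F.generate_subgroup_incl[OF _ H(1)])
  then show ?thesis using e(1) H(3) by blast
qed

end



definition RR :: "('a \<Rightarrow> 'b) \<Rightarrow> 'a word \<Rightarrow> 'b word" where
  "RR g x = reduce (map (lmap g) x)"

lemma RR_red: "RR g (reduce x) = RR g x"
  unfolding RR_def by (rule reduce_map_reduce)

lemma RR_app: "RR g (x @ y) = reduce (RR g x @ RR g y)"
  unfolding RR_def by (simp add: reduce_reduce_left reduce_reduce_right)

lemma RR_red_left: "RR g (reduce y @ z) = RR g (y @ z)"
  by (simp add: RR_app RR_red)

lemma RR_red_mid: "RR g (x @ reduce y @ z) = RR g (x @ y @ z)"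
proof -
  have "RR g (x @ reduce y @ z) = reduce (RR g x @ RR g (reduce y @ z))" by (rule RR_app)
  also have "\<dots> = reduce (RR g x @ RR g (y @ z))" by (simp add: RR_red_left)
  also have "\<dots> = RR g (x @ y @ z)" by (simp add: RR_app)
  finally show ?thesis .
qed

lemma RR_red_right: "RR g (x @ reduce y) = RR g (x @ y)"
  using RR_red_mid[of g x y "[]"] by simp

lemma RR_nil_mid: "RR g a = [] \<Longrightarrow> RR g (x @ a @ y) = RR g (x @ y)"
proof -
  assume a: "RR g a = []"
  have "RR g (a @ y) = reduce (RR g y)" by (simp add: RR_app a)
  also have "\<dots> = RR g y" unfolding RR_def by simp
  finally have ay: "RR g (a @ y) = RR g y" .
  have "RR g (x @ a @ y) = reduce (RR g x @ RR g (a @ y))" by (rule RR_app)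
  also have "\<dots> = reduce (RR g x @ RR g y)" by (simp only: ay)
  also have "\<dots> = RR g (x @ y)" by (rule RR_app[symmetric])
  finally show ?thesis .
qed

lemma lmap_comp: "lmap f \<circ> lmap g = lmap (f \<circ> g)"
  by (auto simp: lmap_def fun_eq_iff)

lemma RR_comp: "RR f (RR g w) = RR (f \<circ> g) w"
  unfolding RR_def by (simp add: reduce_map_reduce lmap_comp)

lemma reduced_RR: "reduced (RR g w)" unfolding RR_def by (rule reduced_reduce)

lemma set_RR: "fst ` set (RR g w) \<subseteq> g ` fst ` set w"
proof -
  have "set (RR g w) \<subseteq> set (map (lmap g) w)" unfolding RR_def by (rule set_reduce)
  moreover have "fst ` set (map (lmap g) w) = g ` fst ` set w" by (force simp: lmap_def)
  ultimately show ?thesis by blast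
qed

context ctx
begin

lemma fbar_RR: "f_bar e w = RR (f_quot e) w"
  unfolding f_bar_def RR_def lmap_def by simp

lemma mult_RR: "RR g (u \<otimes>\<^bsub>FF\<^esub> v) = RR g (u @ v)"
  by (simp add: mult_FF RR_red)

lemma fbar_carrier:
  assumes e: "e \<in> B" and w: "w \<in> carrier FF"
  shows "f_bar e w \<in> carrier (free_group (S // e))"
proof -
  have "fst ` set (f_bar e w) \<subseteq> f_quot e ` fst ` set w" unfolding fbar_RR by (rule set_RR)
  also have "\<dots> \<subseteq> S // e" using w unfolding mem_carrier f_quot_def quotient_def by blast
  finally show ?thesis using reduced_RR unfolding free_group_def fbar_RR by simp
qed

lemma cls_eq: "e \<in> B \<Longrightarrow> (x, y) \<in> e \<Longrightarrow> f_quot e x = f_quot e y"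
  unfolding f_quot_def using equivs equiv_class_eq by metis

lemma RR_a1:
  assumes e: "e \<in> B" and xy: "(x, y) \<in> e"
  shows "RR (f_quot e) (inv\<^bsub>FF\<^esub> (ins x) \<otimes>\<^bsub>FF\<^esub> ins y) = []"
proof -
  have xS: "x \<in> S" using B_sub[OF e] xy by auto
  have "inv\<^bsub>FF\<^esub> (ins x) \<otimes>\<^bsub>FF\<^esub> ins y = reduce ([(x, False)] @ [(y, True)])"
    unfolding inv_ins[OF xS] by (simp add: mult_FF ins_def)
  then show ?thesis using cls_eq[OF e xy]
    by (simp add: RR_red RR_def lmap_def reduce_Cons step_Cons canceling_def)
qed

lemma RR_a2:
  assumes e: "e \<in> B" and xy: "(x, y) \<in> e"
  shows "RR (f_quot e) (ins x \<otimes>\<^bsub>FF\<^esub> inv\<^bsub>FF\<^esub> (ins y)) = []"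
proof -
  have yS: "y \<in> S" using B_sub[OF e] xy by auto
  have "ins x \<otimes>\<^bsub>FF\<^esub> inv\<^bsub>FF\<^esub> (ins y) = reduce ([(x, True)] @ [(y, False)])"
    unfolding inv_ins[OF yS] by (simp add: mult_FF ins_def)
  then show ?thesis using cls_eq[OF e xy]
    by (simp add: RR_red RR_def lmap_def reduce_Cons step_Cons canceling_def)
qed

lemma fbar_M:
  assumes e: "e \<in> B"
  shows "m \<in> generate FF (eps_tilde S e) \<Longrightarrow> p \<in> carrier FF \<Longrightarrow> f_bar e (p \<otimes>\<^bsub>FF\<^esub> m) = f_bar e p"
proof -
  let ?Z = "{m \<in> carrier FF. \<forall>p\<in>carrier FF. f_bar e (p \<otimes>\<^bsub>FF\<^esub> m) = f_bar e p}"
  have Zs: "subgroup ?Z FF"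
  proof (rule F.subgroupI)
    show "?Z \<subseteq> carrier FF" by blast
    have "\<one>\<^bsub>FF\<^esub> \<in> ?Z" by simp
    then show "?Z \<noteq> {}" by blast
  next
    fix a assume a: "a \<in> ?Z"
    have ac: "a \<in> carrier FF" using a by blast
    have "f_bar e (p \<otimes>\<^bsub>FF\<^esub> inv\<^bsub>FF\<^esub> a) = f_bar e p" if p: "p \<in> carrier FF" for p
    proof -
      have pa: "p \<otimes>\<^bsub>FF\<^esub> inv\<^bsub>FF\<^esub> a \<in> carrier FF" using p ac by simp
      have "f_bar e (p \<otimes>\<^bsub>FF\<^esub> inv\<^bsub>FF\<^esub> a) = f_bar e ((p \<otimes>\<^bsub>FF\<^esub> inv\<^bsub>FF\<^esub> a) \<otimes>\<^bsub>FF\<^esub> a)"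
        using a pa by simp
      also have "(p \<otimes>\<^bsub>FF\<^esub> inv\<^bsub>FF\<^esub> a) \<otimes>\<^bsub>FF\<^esub> a = p" using p ac by (simp add: F.m_assoc)
      finally show ?thesis .
    qed
    then show "inv\<^bsub>FF\<^esub> a \<in> ?Z" using ac by simp
  next
    fix a b assume a: "a \<in> ?Z" and b: "b \<in> ?Z"
    have ac: "a \<in> carrier FF" and bc: "b \<in> carrier FF" using a b by blast+
    have "f_bar e (p \<otimes>\<^bsub>FF\<^esub> (a \<otimes>\<^bsub>FF\<^esub> b)) = f_bar e p" if p: "p \<in> carrier FF" for p
    proof -
      have "p \<otimes>\<^bsub>FF\<^esub> (a \<otimes>\<^bsub>FF\<^esub> b) = (p \<otimes>\<^bsub>FF\<^esub> a) \<otimes>\<^bsub>FF\<^esub> b" using p ac bc by (simp add: F.m_assoc)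
      moreover have "p \<otimes>\<^bsub>FF\<^esub> a \<in> carrier FF" using p ac by simp
      ultimately show ?thesis using a b p by simp
    qed
    then show "a \<otimes>\<^bsub>FF\<^esub> b \<in> ?Z" using ac bc by simp
  qed
  have "eps_tilde S e \<subseteq> ?Z"
  proof
    fix m assume "m \<in> eps_tilde S e"
    then obtain w a where wa: "w \<in> carrier FF" "a \<in> j2 S e \<union> j2s S e"
      "m = w \<otimes>\<^bsub>FF\<^esub> a \<otimes>\<^bsub>FF\<^esub> inv\<^bsub>FF\<^esub> w" using V_elim[of m "\<lambda>_. e"] unfolding eps_tilde_V by blast
    have ac: "a \<in> carrier FF" using wa(2) j2_sub[OF B_sub[OF e]] j2s_sub[OF B_sub[OF e]] by blast
    have Ra: "RR (f_quot e) a = []"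
      using wa(2) RR_a1[OF e] RR_a2[OF e] unfolding j2_def j2s_def by blast
    have mc: "m \<in> carrier FF" using wa ac by simp
    have "f_bar e (p \<otimes>\<^bsub>FF\<^esub> m) = f_bar e p" if p: "p \<in> carrier FF" for p
    proof -
      let ?iw = "inv\<^bsub>FF\<^esub> w"
      have "f_bar e (p \<otimes>\<^bsub>FF\<^esub> m) = RR (f_quot e) (p @ reduce (reduce (w @ a) @ ?iw))"
        unfolding fbar_RR wa(3) by (simp add: mult_FF RR_red)
      also have "\<dots> = RR (f_quot e) ((p @ w) @ a @ ?iw)"
        by (simp add: RR_red_right RR_red_mid[of _ p "w @ a" "?iw", simplified])
      also have "\<dots> = RR (f_quot e) ((p @ w) @ ?iw)" by (rule RR_nil_mid[OF Ra])
      also have "\<dots> = RR (f_quot e) (p @ (w \<otimes>\<^bsub>FF\<^esub> ?iw))" by (simp add: mult_FF RR_red_right)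
      also have "\<dots> = RR (f_quot e) p" using wa(1) by (simp add: one_FF)
      finally show ?thesis unfolding fbar_RR .
    qed
    then show "m \<in> ?Z" using mc by blast
  qed
  then have "generate FF (eps_tilde S e) \<subseteq> ?Z" by (rule F.generate_subgroup_incl[OF _ Zs])
  then show "m \<in> generate FF (eps_tilde S e) \<Longrightarrow> p \<in> carrier FF \<Longrightarrow> f_bar e (p \<otimes>\<^bsub>FF\<^esub> m) = f_bar e p"
    by blast
qed


lemma e_refl: "e \<in> B \<Longrightarrow> x \<in> S \<Longrightarrow> (x, x) \<in> e"
  using equivs unfolding equiv_def refl_on_def by blast

lemma fbar_kernel:
  assumes e: "e \<in> B" and p: "p \<in> carrier FF" and w: "w \<in> carrier FF" and eq: "f_bar e w = f_bar e p"
  shows "inv\<^bsub>FF\<^esub> p \<otimes>\<^bsub>FF\<^esub> w \<in> generate FF (eps_tilde S e)"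
proof -
  define M where "M = generate FF (eps_tilde S e)"
  have Mn: "M \<lhd> FF" unfolding M_def by (rule part2_normal[OF e])
  interpret nM: normal M FF by (rule Mn)
  have Ms: "subgroup M FF" by (rule nM.subgroup_axioms)
  define \<sigma> where "\<sigma> = (\<lambda>C::'a set. SOME y. y \<in> C)"
  define r where "r = \<sigma> \<circ> f_quot e"
  define \<rho> where "\<rho> = RR r"
  have rrel: "(x, r x) \<in> e" if x: "x \<in> S" for x
  proof -
    have "x \<in> e `` {x}" using e_refl[OF e x] by blast
    then have "(SOME y. y \<in> e `` {x}) \<in> e `` {x}" by (rule someI)
    then show ?thesis unfolding r_def \<sigma>_def f_quot_def by simp
  qed
  have rS: "r x \<in> S" if x: "x \<in> S" for x using rrel[OF x] B_sub[OF e] by blast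
  have \<rho>c: "\<rho> v \<in> carrier FF" if v: "v \<in> carrier FF" for v
  proof -
    have "fst ` set (\<rho> v) \<subseteq> r ` fst ` set v" unfolding \<rho>_def by (rule set_RR)
    also have "\<dots> \<subseteq> S" using v rS unfolding mem_carrier by blast
    finally show ?thesis unfolding mem_carrier \<rho>_def using reduced_RR by blast
  qed
  have \<rho>mult: "\<rho> (u \<otimes>\<^bsub>FF\<^esub> v) = \<rho> u \<otimes>\<^bsub>FF\<^esub> \<rho> v" for u v
    unfolding \<rho>_def mult_RR by (simp add: mult_FF RR_app)
  have \<rho>one: "\<rho> \<one>\<^bsub>FF\<^esub> = \<one>\<^bsub>FF\<^esub>" unfolding \<rho>_def RR_def by (simp add: one_FF)
  have \<rho>ins: "\<rho> (ins x) = ins (r x)" for x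
    unfolding \<rho>_def RR_def by (simp add: ins_def lmap_def reduce_Cons)
  have \<rho>invins: "\<rho> (inv\<^bsub>FF\<^esub> (ins x)) = inv\<^bsub>FF\<^esub> (ins (r x))" if x: "x \<in> S" for x
    unfolding inv_ins[OF x] inv_ins[OF rS[OF x]] \<rho>_def RR_def by (simp add: lmap_def reduce_Cons)
  have \<rho>fbar: "\<rho> v = RR \<sigma> (f_bar e v)" for v
    unfolding fbar_RR RR_comp r_def \<rho>_def ..
  have Mincl: "a \<in> M" if a: "a \<in> j2 S e \<union> j2s S e" "a \<in> carrier FF" for a
  proof -
    have "a \<in> V_psi S (\<lambda>_. e)" by (rule V_base) (use a in simp_all)
    then show ?thesis unfolding M_def eps_tilde_V by (rule generate.incl)
  qed
  have main: "inv\<^bsub>FF\<^esub> v \<otimes>\<^bsub>FF\<^esub> \<rho> v \<in> M" if v: "v \<in> generate FF (ins ` S)" for v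
    using v
  proof (induction rule: generate.induct)
    case one
    show ?case using \<rho>one subgroup.one_closed[OF Ms] by simp
  next
    case (incl v)
    then obtain x where x: "x \<in> S" "v = ins x" by blast
    have "inv\<^bsub>FF\<^esub> (ins x) \<otimes>\<^bsub>FF\<^esub> ins (r x) \<in> j2 S e" by (rule j2_in[OF rrel[OF x(1)]])
    moreover have "inv\<^bsub>FF\<^esub> (ins x) \<otimes>\<^bsub>FF\<^esub> ins (r x) \<in> carrier FF"
      using ins_carrier[OF x(1)] ins_carrier[OF rS[OF x(1)]] by simp
    ultimately show ?case using Mincl x(2) \<rho>ins by simp
  next
    case (inv v)
    then obtain x where x: "x \<in> S" "v = ins x" by blast
    have "ins x \<otimes>\<^bsub>FF\<^esub> inv\<^bsub>FF\<^esub> (ins (r x)) \<in> j2s S e" by (rule j2s_in[OF rrel[OF x(1)]])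
    moreover have "ins x \<otimes>\<^bsub>FF\<^esub> inv\<^bsub>FF\<^esub> (ins (r x)) \<in> carrier FF"
      using ins_carrier[OF x(1)] ins_carrier[OF rS[OF x(1)]] by simp
    ultimately show ?case using Mincl x \<rho>invins[OF x(1)] ins_carrier[OF x(1)] by simp
  next
    case (eng v1 v2)
    have sub: "ins ` S \<subseteq> carrier FF" using ins_carrier by blast
    have c: "v1 \<in> carrier FF" "v2 \<in> carrier FF" using eng.hyps F.generate_in_carrier[OF sub] by blast+
    have rc: "\<rho> v1 \<in> carrier FF" "\<rho> v2 \<in> carrier FF" using \<rho>c c by blast+
    have X: "inv\<^bsub>FF\<^esub> v2 \<otimes>\<^bsub>FF\<^esub> (inv\<^bsub>FF\<^esub> v1 \<otimes>\<^bsub>FF\<^esub> \<rho> v1) \<otimes>\<^bsub>FF\<^esub> v2 \<in> M"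
      by (rule nM.inv_op_closed1[OF c(2) eng.IH(1)])
    have "inv\<^bsub>FF\<^esub> (v1 \<otimes>\<^bsub>FF\<^esub> v2) \<otimes>\<^bsub>FF\<^esub> \<rho> (v1 \<otimes>\<^bsub>FF\<^esub> v2) =
        (inv\<^bsub>FF\<^esub> v2 \<otimes>\<^bsub>FF\<^esub> (inv\<^bsub>FF\<^esub> v1 \<otimes>\<^bsub>FF\<^esub> \<rho> v1) \<otimes>\<^bsub>FF\<^esub> v2) \<otimes>\<^bsub>FF\<^esub> (inv\<^bsub>FF\<^esub> v2 \<otimes>\<^bsub>FF\<^esub> \<rho> v2)"
      using c rc by (simp add: \<rho>mult F.inv_mult_group F.m_assoc F.cancel1)
    then show ?case using subgroup.m_closed[OF Ms X eng.IH(2)] by simp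
  qed
  have A: "inv\<^bsub>FF\<^esub> p \<otimes>\<^bsub>FF\<^esub> \<rho> p \<in> M" using main gen_all[OF p] by blast
  have Bw: "inv\<^bsub>FF\<^esub> w \<otimes>\<^bsub>FF\<^esub> \<rho> w \<in> M" using main gen_all[OF w] by blast
  have same: "\<rho> w = \<rho> p" using eq \<rho>fbar by simp
  have "inv\<^bsub>FF\<^esub> p \<otimes>\<^bsub>FF\<^esub> w = (inv\<^bsub>FF\<^esub> p \<otimes>\<^bsub>FF\<^esub> \<rho> p) \<otimes>\<^bsub>FF\<^esub> inv\<^bsub>FF\<^esub> (inv\<^bsub>FF\<^esub> w \<otimes>\<^bsub>FF\<^esub> \<rho> w)"
    using p w \<rho>c[OF p] \<rho>c[OF w] same by (simp add: F.inv_mult_group F.m_assoc F.cancel1)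
  moreover have "(inv\<^bsub>FF\<^esub> p \<otimes>\<^bsub>FF\<^esub> \<rho> p) \<otimes>\<^bsub>FF\<^esub> inv\<^bsub>FF\<^esub> (inv\<^bsub>FF\<^esub> w \<otimes>\<^bsub>FF\<^esub> \<rho> w) \<in> M"
    by (rule subgroup.m_closed[OF Ms A subgroup.m_inv_closed[OF Ms Bw]])
  ultimately show ?thesis unfolding M_def by simp
qed


lemma part2b:
  assumes FNA: "is_FNA_b S U T"
  shows "T = topology_generated_by
              {{w \<in> carrier FF. f_bar e w \<in> Q} | e Q.
                 e \<in> B \<and> openin (discrete_topology (carrier (free_group (S // e)))) Q}"
    (is "T = topology_generated_by ?S")
proof -
  note P = FNAb_parts[OF FNA]
  have TG: "topgroup FF T" using P(1) unfolding nonarch_group_def by blast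
  have basis_open: "openin T s" if s: "s \<in> ?S" for s
  proof -
    obtain e Q where eQ: "s = {w \<in> carrier FF. f_bar e w \<in> Q}" "e \<in> B" using s by blast
    have "\<exists>T'. openin T T' \<and> p \<in> T' \<and> T' \<subseteq> s" if p: "p \<in> s" for p
    proof -
      have pc: "p \<in> carrier FF" and pQ: "f_bar e p \<in> Q" using p eQ(1) by auto
      obtain W where W: "openin T W" "\<one>\<^bsub>FF\<^esub> \<in> W" "W \<subseteq> generate FF (eps_tilde S e)"
        using part2_open[OF FNA eQ(2)] unfolding nbhd1_def by blast
      have ip: "inv\<^bsub>FF\<^esub> p \<in> carrier FF" using pc by simp
      let ?T = "{x \<in> carrier FF. inv\<^bsub>FF\<^esub> p \<otimes>\<^bsub>FF\<^esub> x \<in> W}"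
      have "openin T ?T" by (rule tg_lmul_open[OF TG ip W(1)])
      moreover have "p \<in> ?T" using pc W(2) by simp
      moreover have "?T \<subseteq> s"
      proof
        fix x assume x: "x \<in> ?T"
        then have xc: "x \<in> carrier FF" and m: "inv\<^bsub>FF\<^esub> p \<otimes>\<^bsub>FF\<^esub> x \<in> generate FF (eps_tilde S e)"
          using W(3) by auto
        have "f_bar e (p \<otimes>\<^bsub>FF\<^esub> (inv\<^bsub>FF\<^esub> p \<otimes>\<^bsub>FF\<^esub> x)) = f_bar e p" by (rule fbar_M[OF eQ(2) m pc])
        moreover have "p \<otimes>\<^bsub>FF\<^esub> (inv\<^bsub>FF\<^esub> p \<otimes>\<^bsub>FF\<^esub> x) = x" using pc xc by (rule F.cancel1)
        ultimately show "x \<in> s" using eQ(1) xc pQ by simp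
      qed
      ultimately show ?thesis by blast
    qed
    then show ?thesis by (subst openin_subopen) blast
  qed
  have gen_open: "openin T Xo" if Xo: "generate_topology_on ?S Xo" for Xo
    using Xo
  proof (induction rule: generate_topology_on.induct)
    case Empty then show ?case by simp
  next
    case (Int a b) then show ?case by (intro openin_Int) blast+
  next
    case (UN K) then show ?case by (intro openin_Union) blast
  next
    case (Basis s) then show ?case by (rule basis_open)
  qed
  have open_gen: "generate_topology_on ?S Xo" if Xo: "openin T Xo" for Xo
  proof -
    have Xc: "Xo \<subseteq> carrier FF" using openin_subset[OF Xo] P(3) by simp
    have "\<exists>e. e \<in> B \<and> generate FF (eps_tilde S e) \<subseteq> {x \<in> carrier FF. p \<otimes>\<^bsub>FF\<^esub> x \<in> Xo}"
      if p: "p \<in> Xo" for p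
    proof -
      have pc: "p \<in> carrier FF" using p Xc by blast
      have o: "openin T {x \<in> carrier FF. p \<otimes>\<^bsub>FF\<^esub> x \<in> Xo}" by (rule tg_lmul_open[OF TG pc Xo])
      have "\<one>\<^bsub>FF\<^esub> \<in> {x \<in> carrier FF. p \<otimes>\<^bsub>FF\<^esub> x \<in> Xo}" using p pc by simp
      then have "nbhd1 FF T {x \<in> carrier FF. p \<otimes>\<^bsub>FF\<^esub> x \<in> Xo}"
        unfolding nbhd1_def P(3) using o by blast
      from part2_contains[OF FNA this] show ?thesis by blast
    qed
    then obtain E where E: "\<forall>p\<in>Xo. E p \<in> B \<and> generate FF (eps_tilde S (E p)) \<subseteq> {x \<in> carrier FF. p \<otimes>\<^bsub>FF\<^esub> x \<in> Xo}"
      using bchoice[of Xo] by meson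
    define Bp where "Bp = (\<lambda>p. {w \<in> carrier FF. f_bar (E p) w \<in> {f_bar (E p) p}})"
    have BpS: "Bp p \<in> ?S" if p: "p \<in> Xo" for p
    proof -
      have "f_bar (E p) p \<in> carrier (free_group (S // E p))"
        using fbar_carrier E p Xc by blast
      then have "openin (discrete_topology (carrier (free_group (S // E p)))) {f_bar (E p) p}" by simp
      then show ?thesis unfolding Bp_def using E p by blast
    qed
    have "Xo = \<Union> (Bp ` Xo)"
    proof (intro equalityI subsetI)
      fix p assume p: "p \<in> Xo"
      then have "p \<in> Bp p" unfolding Bp_def using Xc by blast
      then show "p \<in> \<Union> (Bp ` Xo)" using p by blast
    next
      fix w assume "w \<in> \<Union> (Bp ` Xo)"
      then obtain p where p: "p \<in> Xo" "w \<in> Bp p" by blast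
      have pc: "p \<in> carrier FF" using p Xc by blast
      have wc: "w \<in> carrier FF" and eq: "f_bar (E p) w = f_bar (E p) p" using p(2) unfolding Bp_def by auto
      have "inv\<^bsub>FF\<^esub> p \<otimes>\<^bsub>FF\<^esub> w \<in> generate FF (eps_tilde S (E p))"
        by (rule fbar_kernel[OF _ pc wc eq]) (use E p in blast)
      then have "p \<otimes>\<^bsub>FF\<^esub> (inv\<^bsub>FF\<^esub> p \<otimes>\<^bsub>FF\<^esub> w) \<in> Xo" using E p by blast
      moreover have "p \<otimes>\<^bsub>FF\<^esub> (inv\<^bsub>FF\<^esub> p \<otimes>\<^bsub>FF\<^esub> w) = w" using pc wc by (rule F.cancel1)
      ultimately show "w \<in> Xo" by simp
    qed
    moreover have "generate_topology_on ?S (\<Union> (Bp ` Xo))"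
      by (rule generate_topology_on.UN) (use BpS generate_topology_on.Basis in blast)
    ultimately show ?thesis by simp
  qed
  show ?thesis unfolding topology_eq openin_topology_generated_by_iff
    using gen_open open_gen by blast
qed

end



theorem theorem4p13:
  fixes S :: "'a set" and U :: "('a \<times> 'a) set set" and B :: "('a \<times> 'a) set set"
  assumes unif: "uniformity_on_set S U"
    and base: "is_base U B"
    and equivs: "\<forall>e\<in>B. equiv S e"
  shows
    "(\<forall>T. is_FNA S U T \<longrightarrow>
        (\<forall>\<psi> \<in> carrier (free_group S) \<rightarrow> B.
            subgroup (generate (free_group S) (V_psi S \<psi>)) (free_group S) \<and>
            nbhd1 (free_group S) T (generate (free_group S) (V_psi S \<psi>))) \<and>
        (\<forall>N. nbhd1 (free_group S) T N \<longrightarrow>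
            (\<exists>\<psi> \<in> carrier (free_group S) \<rightarrow> B. generate (free_group S) (V_psi S \<psi>) \<subseteq> N)))
     \<and>
     (\<forall>T. is_FNA_b S U T \<longrightarrow>
        ((\<forall>e\<in>B. generate (free_group S) (eps_tilde S e) \<lhd> free_group S \<and>
                nbhd1 (free_group S) T (generate (free_group S) (eps_tilde S e))) \<and>
         (\<forall>N. nbhd1 (free_group S) T N \<longrightarrow>
            (\<exists>e\<in>B. generate (free_group S) (eps_tilde S e) \<subseteq> N))) \<and>
        T = topology_generated_by
              {{w \<in> carrier (free_group S). f_bar e w \<in> Q} | e Q.
                 e \<in> B \<and> openin (discrete_topology (carrier (free_group (S // e)))) Q})"
  proof -
  have P1: "\<forall>T. is_FNA S U T \<longrightarrow>
        (\<forall>\<psi> \<in> carrier (free_group S) \<rightarrow> B.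
            subgroup (generate (free_group S) (V_psi S \<psi>)) (free_group S) \<and>
            nbhd1 (free_group S) T (generate (free_group S) (V_psi S \<psi>))) \<and>
        (\<forall>N. nbhd1 (free_group S) T N \<longrightarrow>
            (\<exists>\<psi> \<in> carrier (free_group S) \<rightarrow> B. generate (free_group S) (V_psi S \<psi>) \<subseteq> N))"
  proof (intro allI impI)
    fix T assume FNA: "is_FNA S U T"
    have na: "nonarch_group (free_group S) T" using FNA unfolding is_FNA_def by (rule conjunct1)
    have grp: "group (free_group S)" using na unfolding nonarch_group_def topgroup_def by blast
    interpret C: ctx S U B
      by (rule ctx.intro[OF fg.intro[OF grp] ctx_axioms.intro[OF unif base equivs]])
    note Q = C.FNA_parts[OF FNA]
    show "(\<forall>\<psi> \<in> carrier (free_group S) \<rightarrow> B.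
            subgroup (generate (free_group S) (V_psi S \<psi>)) (free_group S) \<and>
            nbhd1 (free_group S) T (generate (free_group S) (V_psi S \<psi>))) \<and>
        (\<forall>N. nbhd1 (free_group S) T N \<longrightarrow>
            (\<exists>\<psi> \<in> carrier (free_group S) \<rightarrow> B. generate (free_group S) (V_psi S \<psi>) \<subseteq> N))"
      using C.gen_sub C.part1_open[OF FNA] C.part1_contains[OF Q(1) Q(3)] by blast
  qed
  have P2: "\<forall>T. is_FNA_b S U T \<longrightarrow>
        ((\<forall>e\<in>B. generate (free_group S) (eps_tilde S e) \<lhd> free_group S \<and>
                nbhd1 (free_group S) T (generate (free_group S) (eps_tilde S e))) \<and>
         (\<forall>N. nbhd1 (free_group S) T N \<longrightarrow>
            (\<exists>e\<in>B. generate (free_group S) (eps_tilde S e) \<subseteq> N))) \<and>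
        T = topology_generated_by
              {{w \<in> carrier (free_group S). f_bar e w \<in> Q} | e Q.
                 e \<in> B \<and> openin (discrete_topology (carrier (free_group (S // e)))) Q}"
  proof (intro allI impI)
    fix T assume FNA: "is_FNA_b S U T"
    have na: "nonarch_group (free_group S) T" using FNA unfolding is_FNA_b_def by (rule conjunct1)
    have grp: "group (free_group S)" using na unfolding nonarch_group_def topgroup_def by blast
    interpret C: ctx S U B
      by (rule ctx.intro[OF fg.intro[OF grp] ctx_axioms.intro[OF unif base equivs]])
    have A: "\<forall>e\<in>B. generate (free_group S) (eps_tilde S e) \<lhd> free_group S \<and>
                nbhd1 (free_group S) T (generate (free_group S) (eps_tilde S e))"
      using C.part2_normal C.part2_open[OF FNA] by blast
    have Bc: "\<forall>N. nbhd1 (free_group S) T N \<longrightarrow>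
            (\<exists>e\<in>B. generate (free_group S) (eps_tilde S e) \<subseteq> N)"
      using C.part2_contains[OF FNA] by blast
    show "((\<forall>e\<in>B. generate (free_group S) (eps_tilde S e) \<lhd> free_group S \<and>
                nbhd1 (free_group S) T (generate (free_group S) (eps_tilde S e))) \<and>
         (\<forall>N. nbhd1 (free_group S) T N \<longrightarrow>
            (\<exists>e\<in>B. generate (free_group S) (eps_tilde S e) \<subseteq> N))) \<and>
        T = topology_generated_by
              {{w \<in> carrier (free_group S). f_bar e w \<in> Q} | e Q.
                 e \<in> B \<and> openin (discrete_topology (carrier (free_group (S // e)))) Q}"
      using A Bc C.part2b[OF FNA] by blast
  qed
  show ?thesis using P1 P2 by (rule conjI)
qed

end
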